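(* Let $\mathrm L$ be a spline-admissible operator with null space $\mathcal N_{\mathrm L}$ and pseudoinverse $\mathrm L^\dagger$, and let $p\in[1,\infty]$. Then the native space $\mathcal M_{\mathrm L}(\mathbb T^d)=\{f\in\mathcal S'(\mathbb T^d):\mathrm Lf\in\mathcal M(\mathbb T^d)\}$ is the direct sum $\mathcal M_{\mathrm L}(\mathbb T^d)=\mathrm L^\dagger(\mathcal M(\mathbb T^d))\oplus\mathcal N_{\mathrm L}$, where $\mathrm L^\dagger(\mathcal M(\mathbb T^d))=\{\mathrm L^\dagger w:w\in\mathcal M(\mathbb T^d)\}$. It is a Banach space for the norm $\|f\|_{\mathcal M_{\mathrm L},p}=\big(\|\mathrm Lf\|_{\mathcal M}^p+\|\mathrm{Proj}_{\mathcal N_{\mathrm L}}f\|_2^p\big)^{1/p}$ (maximum for $p=\infty$), and these norms are equivalent for all $p\in[1,\infty]$. Moreover $\mathcal S(\mathbb T^d)\subseteq\mathcal M_{\mathrm L}(\mathbb T^d)\subseteq\mathcal S'(\mathbb T^d)$ with continuous embeddings, $\mathrm L$ is continuous from $\mathcal M_{\mathrm L}(\mathbb T^d)$ to $\mathcal M(\mathbb T^d)$, and every periodic $\mathrm L$-spline belongs to $\mathcal M_{\mathrm L}(\mathbb T^d)$.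
   Context: Let $d\ge1$, $\mathbb T^d=\mathbb R^d/2\pi\mathbb Z^d$, $\mathcal S(\mathbb T^d)$ the smooth periodic functions (Fréchet topology) and $\mathcal S'(\mathbb T^d)$ its dual; for $f\in L_1$, $\langle f,\varphi\rangle=(2\pi)^{-d}\int_{\mathbb T^d}f\varphi$. With $e_{\bm k}(\bm x)=e^{\mathrm i\langle\bm x,\bm k\rangle}$, each $f\in\mathcal S'$ expands uniquely as $f=\sum\widehat f[\bm k]e_{\bm k}$ with slowly growing coefficients. Operators in $\mathcal L_{\mathrm{SI}}(\mathcal S'(\mathbb T^d))$ (linear, shift-invariant, continuous on $\mathcal S'$) act by $\mathrm Lf=\sum\widehat L[\bm k]\widehat f[\bm k]e_{\bm k}$ with slowly growing $\widehat L$. $\mathrm L$ is spline-admissible if its null space $\mathcal N_{\mathrm L}$ is finite-dimensional and it admits a pseudoinverse $\mathrm L^\dagger\in\mathcal L_{\mathrm{SI}}$ ($\mathrm L\mathrm L^\dagger\mathrm L=\mathrm L$, $\mathrm L^\dagger\mathrm L\mathrm L^\dagger=\mathrm L^\dagger$, $\mathrm L\mathrm L^\dagger$ and $\mathrm L^\dagger\mathrm L$ self-adjoint); then $N_{\mathrm L}=\{\bm k:\widehat L[\bm k]=0\}=\{\bm k_1,\dots,\bm k_{N_0}\}$ is finite, $\mathcal N_{\mathrm L}=\mathrm{Span}\{e_{\bm k_n}\}$, $\mathrm L^\dagger$ has Fourier sequence $1/\widehat L[\bm k]$ off $N_{\mathrm L}$ and $0$ on it, and $\mathrm{Proj}_{\mathcal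 N_{\mathrm L}}f:=\sum_{n=1}^{N_0}\widehat f[\bm k_n]e_{\bm k_n}$. $\|\cdot\|_2$ is the $L_2$ norm for the normalized measure, so $\|p\|_2^2=\sum|\widehat p[\bm k]|^2$. $\mathcal C(\mathbb T^d)$ is the space of continuous periodic functions with $\|\cdot\|_\infty$; $\mathcal M(\mathbb T^d)=\mathcal C(\mathbb T^d)'$ is the space of periodic finite Radon measures with total variation norm, identified with $\{w\in\mathcal S'(\mathbb T^d):\|w\|_{\mathcal M}:=\sup_{\varphi\in\mathcal S,\|\varphi\|_\infty=1}\langle w,\varphi\rangle<\infty\}$. The Dirac comb $Ш$ is given by $\langle Ш,\varphi\rangle=\varphi(\bm 0)$. A periodic $\mathrm L$-spline is an $f\in\mathcal S'(\mathbb T^d)$ with $\mathrm Lf=\sum_{k=1}^Ka_kШ(\cdot-\bm x_k)$ for some $K\ge0$, distinct $\bm x_k\in\mathbb T^d$ and $a_k\in\mathbb R\setminus\{0\}$. *)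

theory Defs
  imports "HOL-Analysis.Analysis"
begin

text \<open>Periodic distributions on the torus T^d are represented by their Fourier
  coefficient sequences indexed by Z^d (here: functions 'd => int for a finite
  index type 'd with d = CARD('d)).  Real-valued objects correspond to
  Hermitian-symmetric coefficient sequences.\<close>

type_synonym 'd fseq = "('d \<Rightarrow> int) \<Rightarrow> complex"

definition kabs :: "('d::finite \<Rightarrow> int) \<Rightarrow> real" where
  "kabs k = (\<Sum>i\<in>UNIV. real_of_int \<bar>k i\<bar>)"

definition kneg :: "('d::finite \<Rightarrow> int) \<Rightarrow> ('d \<Rightarrow> int)" where
  "kneg k = (\<lambda>i. - k i)"

definition hermitian :: "'d::finite fseq \<Rightarrow> bool" where
  "hermitian c \<longleftrightarrow> (\<forall>k. c (kneg k) = cnj (c k))"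

definition slowly_growing :: "'d::finite fseq \<Rightarrow> bool" where
  "slowly_growing c \<longleftrightarrow> (\<exists>C N. \<forall>k. cmod (c k) \<le> C * (1 + kabs k) ^ N)"

definition rapidly_decaying :: "'d::finite fseq \<Rightarrow> bool" where
  "rapidly_decaying c \<longleftrightarrow> (\<forall>N. \<exists>C. \<forall>k. cmod (c k) * (1 + kabs k) ^ N \<le> C)"

text \<open>S(T^d): smooth real periodic functions; S'(T^d): real periodic distributions.\<close>
definition Sspace :: "'d::finite fseq set" where
  "Sspace = {c. rapidly_decaying c \<and> hermitian c}"

definition Sdual :: "'d::finite fseq set" where
  "Sdual = {c. slowly_growing c \<and> hermitian c}"

definition Sseminorm :: "nat \<Rightarrow> 'd::finite fseq \<Rightarrow> real" where
  "Sseminorm N c = (SUP k. cmod (c k) * (1 + kabs k) ^ N)"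

definition inner_xk :: "('d::finite \<Rightarrow> real) \<Rightarrow> ('d \<Rightarrow> int) \<Rightarrow> real" where
  "inner_xk x k = (\<Sum>i\<in>UNIV. x i * real_of_int (k i))"

definition eval_fun :: "'d::finite fseq \<Rightarrow> ('d \<Rightarrow> real) \<Rightarrow> complex" where
  "eval_fun c x = infsum (\<lambda>k. c k * cis (inner_xk x k)) UNIV"

definition sup_norm :: "'d::finite fseq \<Rightarrow> real" where
  "sup_norm c = (SUP x. cmod (eval_fun c x))"

text \<open>Duality pairing <f,phi> = (2pi)^{-d} int f phi = sum_k f^[k] phi^[-k].\<close>
definition pairing :: "'d::finite fseq \<Rightarrow> 'd fseq \<Rightarrow> real" where
  "pairing f \<phi> = Re (infsum (\<lambda>k. f k * \<phi> (kneg k)) UNIV)"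

text \<open>M(T^d) as the set of distributions with finite total-variation norm.\<close>
definition Mset :: "'d::finite fseq set" where
  "Mset = {w \<in> Sdual. bdd_above {pairing w \<phi> |\<phi>. \<phi> \<in> Sspace \<and> sup_norm \<phi> = 1}}"

definition Mnorm :: "'d::finite fseq \<Rightarrow> real" where
  "Mnorm w = Sup {pairing w \<phi> |\<phi>. \<phi> \<in> Sspace \<and> sup_norm \<phi> = 1}"

text \<open>LSI operators are given by their Fourier multipliers.\<close>
definition LSI :: "'d::finite fseq set" where
  "LSI = {m. slowly_growing m \<and> hermitian m}"

definition apply_op :: "'d::finite fseq \<Rightarrow> 'd fseq \<Rightarrow> 'd fseq" where
  "apply_op m f = (\<lambda>k. m k * f k)"

text \<open>Adjoint (transpose w.r.t. the pairing) of a multiplier operator.\<close>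
definition adj_op :: "'d::finite fseq \<Rightarrow> 'd fseq" where
  "adj_op m = (\<lambda>k. m (kneg k))"

definition comp_op :: "'d::finite fseq \<Rightarrow> 'd fseq \<Rightarrow> 'd fseq" where
  "comp_op m1 m2 = (\<lambda>k. m1 k * m2 k)"

definition null_space :: "'d::finite fseq \<Rightarrow> 'd fseq set" where
  "null_space L = {f \<in> Sdual. apply_op L f = (\<lambda>k. 0)}"

definition is_pseudoinverse :: "'d::finite fseq \<Rightarrow> 'd fseq \<Rightarrow> bool" where
  "is_pseudoinverse L M \<longleftrightarrow> M \<in> LSI \<and>
     comp_op L (comp_op M L) = L \<and> comp_op M (comp_op L M) = M \<and>
     adj_op (comp_op L M) = comp_op L M \<and> adj_op (comp_op M L) = comp_op M L"

text \<open>Finite dimensionality of the null space is expressed by the finiteness of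
  the zero set of the multiplier (null space = span of the e_k with L^[k]=0).\<close>
definition spline_admissible :: "'d::finite fseq \<Rightarrow> bool" where
  "spline_admissible L \<longleftrightarrow> L \<in> LSI \<and> finite {k. L k = 0} \<and> (\<exists>M. is_pseudoinverse L M)"

definition pinv :: "'d::finite fseq \<Rightarrow> 'd fseq" where
  "pinv L = (\<lambda>k. if L k = 0 then 0 else 1 / L k)"

definition proj_null :: "'d::finite fseq \<Rightarrow> 'd fseq \<Rightarrow> 'd fseq" where
  "proj_null L f = (\<lambda>k. if L k = 0 then f k else 0)"

definition l2norm :: "'d::finite fseq \<Rightarrow> real" where
  "l2norm c = sqrt (infsum (\<lambda>k. (cmod (c k))\<^sup>2) UNIV)"

definition native_space :: "'d::finite fseq \<Rightarrow> 'd fseq set" where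
  "native_space L = {f \<in> Sdual. apply_op L f \<in> Mset}"

definition native_norm :: "'d::finite fseq \<Rightarrow> ereal \<Rightarrow> 'd fseq \<Rightarrow> real" where
  "native_norm L p f =
     (if p = \<infinity> then max (Mnorm (apply_op L f)) (l2norm (proj_null L f))
      else (Mnorm (apply_op L f) powr real_of_ereal p
            + l2norm (proj_null L f) powr real_of_ereal p) powr (1 / real_of_ereal p))"

definition banach_on :: "'d::finite fseq set \<Rightarrow> ('d fseq \<Rightarrow> real) \<Rightarrow> bool" where
  "banach_on V nrm \<longleftrightarrow>
     (\<lambda>k. 0) \<in> V \<and>
     (\<forall>f\<in>V. \<forall>g\<in>V. (\<lambda>k. f k + g k) \<in> V) \<and>
     (\<forall>f\<in>V. \<forall>c::real. (\<lambda>k. of_real c * f k) \<in> V) \<and>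
     (\<forall>f\<in>V. 0 \<le> nrm f \<and> (nrm f = 0 \<longleftrightarrow> f = (\<lambda>k. 0))) \<and>
     (\<forall>f\<in>V. \<forall>c::real. nrm (\<lambda>k. of_real c * f k) = \<bar>c\<bar> * nrm f) \<and>
     (\<forall>f\<in>V. \<forall>g\<in>V. nrm (\<lambda>k. f k + g k) \<le> nrm f + nrm g) \<and>
     (\<forall>s. (\<forall>n. s n \<in> V) \<and>
          (\<forall>e>0. \<exists>N. \<forall>m\<ge>N. \<forall>n\<ge>N. nrm (\<lambda>k. s m k - s n k) < e)
          \<longrightarrow> (\<exists>f\<in>V. (\<lambda>n. nrm (\<lambda>k. s n k - f k)) \<longlonglongrightarrow> 0))"

definition dirac_shift :: "('d::finite \<Rightarrow> real) \<Rightarrow> 'd fseq" where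
  "dirac_shift x = (\<lambda>k. cis (- inner_xk x k))"

definition torus_eq :: "('d::finite \<Rightarrow> real) \<Rightarrow> ('d \<Rightarrow> real) \<Rightarrow> bool" where
  "torus_eq x y \<longleftrightarrow> (\<forall>i. \<exists>n::int. x i - y i = 2 * pi * of_int n)"

definition is_periodic_spline :: "'d::finite fseq \<Rightarrow> 'd fseq \<Rightarrow> bool" where
  "is_periodic_spline L f \<longleftrightarrow> f \<in> Sdual \<and>
     (\<exists>K::nat. \<exists>x::nat \<Rightarrow> ('d \<Rightarrow> real). \<exists>a::nat \<Rightarrow> real.
        (\<forall>i<K. \<forall>j<K. i \<noteq> j \<longrightarrow> \<not> torus_eq (x i) (x j)) \<and>
        (\<forall>i<K. a i \<noteq> 0) \<and>
        apply_op L f = (\<lambda>k. \<Sum>i<K. of_real (a i) * dirac_shift (x i) k))"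

end

theory Submission
  imports Defs
begin


lemma kneg_kneg[simp]: "kneg (kneg k) = k" by (simp add: kneg_def)
lemma kneg_eq_iff[simp]: "kneg a = kneg b \<longleftrightarrow> a = b" by (metis kneg_kneg)
lemma bij_kneg: "bij kneg"
  by (metis bij_betw_imageI inj_def kneg_eq_iff kneg_kneg surj_def)
lemma kabs_kneg[simp]: "kabs (kneg k) = kabs k" by (simp add: kabs_def kneg_def)
lemma kabs_nonneg: "0 \<le> kabs k" by (simp add: kabs_def sum_nonneg)

definition wt :: "('d::finite \<Rightarrow> int) \<Rightarrow> real" where
  "wt k = (\<Prod>i\<in>UNIV. 1 / (1 + real_of_int \<bar>k i\<bar>)^2)"

lemma wt_pos: "0 < wt k"
  unfolding wt_def by (intro prod_pos) (auto intro!: divide_pos_pos)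

lemma prod_le_kabs: "(\<Prod>i\<in>UNIV. (1 + real_of_int \<bar>(k::'d::finite\<Rightarrow>int) i\<bar>)) \<le> (1 + kabs k) ^ CARD('d)"
proof -
  have "(\<Prod>i\<in>UNIV. (1 + real_of_int \<bar>k i\<bar>)) \<le> (\<Prod>i\<in>(UNIV::'d set). (1 + kabs k))"
  proof (intro prod_mono conjI)
    fix i :: 'd
    show "0 \<le> 1 + real_of_int \<bar>k i\<bar>" by simp
    have "real_of_int \<bar>k i\<bar> \<le> kabs k" unfolding kabs_def
      by (rule member_le_sum) auto
    then show "1 + real_of_int \<bar>k i\<bar> \<le> 1 + kabs k" by simp
  qed
  then show ?thesis by simp
qed

lemma wt_ge: "1 / (1 + kabs k) ^ (2*CARD('d)) \<le> wt (k::'d::finite\<Rightarrow>int)"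
proof -
  define P where "P = (\<Prod>i\<in>UNIV. (1 + real_of_int \<bar>k i\<bar>))"
  have P1: "1 \<le> P" unfolding P_def by (intro prod_ge_1) auto
  have "wt k = 1 / P^2" unfolding wt_def P_def
    by (simp add: prod_dividef prod_power_distrib)
  moreover have "P^2 \<le> ((1 + kabs k) ^ CARD('d))^2"
    unfolding P_def using prod_le_kabs[of k] P1 P_def by (intro power_mono) auto
  ultimately show ?thesis using P1
    by (simp add: power_mult[symmetric] mult.commute frac_le)
qed

lemma sum1_nat: "(\<lambda>n::nat. 1 / (1 + real n)^2) summable_on UNIV"
proof -
  have "summable (\<lambda>n::nat. 1 / (real n)^2)"
    using inverse_power_summable[of 2] by (simp add: inverse_eq_divide)
  then have "summable (\<lambda>n::nat. 1 / (real (Suc n))^2)"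
    by (subst summable_Suc_iff)
  then have "summable (\<lambda>n::nat. 1 / (1 + real n)^2)"
    by (simp add: add.commute)
  then show ?thesis by (subst summable_on_UNIV_nonneg_real_iff) auto
qed

lemma sum1_int: "(\<lambda>n::int. 1 / (1 + real_of_int \<bar>n\<bar>)^2) summable_on UNIV"
proof -
  let ?g = "\<lambda>n::int. 1 / (1 + real_of_int \<bar>n\<bar>)^2"
  have "?g summable_on (range int)"
    by (subst summable_on_reindex) (auto simp: o_def sum1_nat)
  moreover have "?g summable_on (range (\<lambda>n. - int n))"
    by (subst summable_on_reindex) (auto simp: o_def sum1_nat inj_on_def)
  ultimately have "?g summable_on (range int \<union> range (\<lambda>n. - int n))"
    by (rule summable_on_union)
  moreover have "range int \<union> range (\<lambda>n. - int n) = UNIV"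
    by (auto, metis imageI nonneg_int_cases rangeI neg_equal_iff_equal int_cases2)
  ultimately show ?thesis by simp
qed

lemma wt_summable: "(wt :: ('d::finite \<Rightarrow> int) \<Rightarrow> real) summable_on UNIV"
proof -
  have "(\<lambda>n::int. norm (1 / (1 + real_of_int \<bar>n\<bar>)^2)) summable_on UNIV"
    by (rule summable_on_cong[THEN iffD1, OF _ sum1_int]) simp
  then have s1: "Infinite_Set_Sum.abs_summable_on (\<lambda>n::int. 1 / (1 + real_of_int \<bar>n\<bar>)^2) UNIV"
    by (simp only: abs_summable_equivalent)
  have "Infinite_Set_Sum.abs_summable_on (\<lambda>g::'d\<Rightarrow>int. \<Prod>i\<in>UNIV. 1 / (1 + real_of_int \<bar>g i\<bar>)^2) (PiE UNIV (\<lambda>_. UNIV))"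
    by (intro abs_summable_on_prod_PiE s1) auto
  then have "Infinite_Sum.abs_summable_on (\<lambda>g::'d\<Rightarrow>int. \<Prod>i\<in>UNIV. 1 / (1 + real_of_int \<bar>g i\<bar>)^2) (PiE UNIV (\<lambda>_. UNIV))"
    by (rule abs_summable_equivalent[THEN iffD2])
  then have "Infinite_Sum.abs_summable_on (\<lambda>g::'d\<Rightarrow>int. \<Prod>i\<in>UNIV. 1 / (1 + real_of_int \<bar>g i\<bar>)^2) UNIV"
    by (simp only: PiE_UNIV_domain Pi_UNIV)
  moreover have "norm (\<Prod>i\<in>UNIV. 1 / (1 + real_of_int \<bar>g i\<bar>)^2) = wt g" for g :: "'d\<Rightarrow>int"
    using wt_pos[of g] unfolding wt_def by simp
  ultimately show ?thesis by (simp only:)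
qed


lemma one_kabs_pos: "0 < 1 + kabs k" using kabs_nonneg[of k] by simp
lemma one_kabs_ge1: "1 \<le> 1 + kabs k" using kabs_nonneg[of k] by simp
lemma one_kabs_pow_ge1: "1 \<le> (1 + kabs k) ^ N" using one_kabs_ge1[of k] by (simp add: one_le_power)
lemma one_kabs_pow_mono: "M \<le> N \<Longrightarrow> (1 + kabs k) ^ M \<le> (1 + kabs k) ^ N"
  using one_kabs_ge1[of k] by (simp add: power_increasing)

lemma SG_boundE:
  fixes c :: "'d::finite fseq"
  assumes "slowly_growing c"
  obtains C N where "C \<ge> 0" "\<And>k. cmod (c k) \<le> C * (1 + kabs k) ^ N"
proof -
  obtain C N where h: "\<And>k. cmod (c k) \<le> C * (1 + kabs k) ^ N"
    using assms unfolding slowly_growing_def by blast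
  have "0 \<le> C * (1 + kabs (undefined::'d\<Rightarrow>int)) ^ N"
    using h[of undefined] norm_ge_zero[of "c undefined"] by linarith
  moreover have "0 < (1 + kabs (undefined::'d\<Rightarrow>int)) ^ N" using one_kabs_pos by (rule zero_less_power)
  ultimately have "C \<ge> 0" by (auto simp: zero_le_mult_iff)
  then show ?thesis using h that by blast
qed

lemma RD_boundE:
  fixes c :: "'d::finite fseq"
  assumes "rapidly_decaying c"
  obtains C where "C \<ge> 0" "\<And>k. cmod (c k) * (1 + kabs k) ^ N \<le> C"
proof -
  obtain C where h: "\<And>k. cmod (c k) * (1 + kabs k) ^ N \<le> C"
    using assms unfolding rapidly_decaying_def by blast
  have "0 \<le> cmod (c undefined) * (1 + kabs (undefined::'d\<Rightarrow>int)) ^ N"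
    using one_kabs_pos[of "undefined::'d\<Rightarrow>int"] by simp
  then have "0 \<le> C" using h[of undefined] by linarith
  then show ?thesis using h that by blast
qed

lemma RD_wtE:
  fixes c :: "'d::finite fseq"
  assumes "rapidly_decaying c"
  obtains B where "B \<ge> 0" "\<And>k. cmod (c k) \<le> B * wt k / (1 + kabs k)"
proof -
  obtain C where C: "C \<ge> 0" "\<And>k. cmod (c k) * (1 + kabs k) ^ (2*CARD('d) + 1) \<le> C"
    using RD_boundE[OF assms] by blast
  have "cmod (c k) \<le> C * wt k / (1 + kabs k)" for k
  proof -
    have pos: "0 < (1 + kabs k) ^ (2*CARD('d))" using one_kabs_pos[of k] by simp
    have "cmod (c k) \<le> C / (1 + kabs k) ^ (2*CARD('d) + 1)"
      using C(2)[of k] one_kabs_pos[of k] by (subst pos_le_divide_eq) auto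
    also have "\<dots> = (C * (1 / (1 + kabs k) ^ (2*CARD('d)))) / (1 + kabs k)"
      by (simp add: field_simps)
    also have "\<dots> \<le> C * wt k / (1 + kabs k)"
      using wt_ge[of k] C(1) one_kabs_pos[of k]
      by (intro divide_right_mono mult_left_mono) auto
    finally show ?thesis .
  qed
  then show ?thesis using that C(1) by blast
qed

lemma RD_wt0E:
  fixes c :: "'d::finite fseq"
  assumes "rapidly_decaying c"
  obtains B where "B \<ge> 0" "\<And>k. cmod (c k) \<le> B * wt k"
proof -
  obtain B where B: "B \<ge> 0" "\<And>k. cmod (c k) \<le> B * wt k / (1 + kabs k)"
    using RD_wtE[OF assms] by blast
  have "B * wt k / (1 + kabs k) \<le> B * wt k" for k
  proof -
    have "B * wt k * 1 \<le> B * wt k * (1 + kabs k)"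
      using one_kabs_ge1[of k] B(1) wt_pos[of k] by (intro mult_left_mono) auto
    then show ?thesis using one_kabs_pos[of k] by (subst pos_divide_le_eq) auto
  qed
  then show ?thesis using B that by (meson order_trans)
qed

lemma RD_norm_summable:
  fixes c :: "'d::finite fseq"
  assumes "rapidly_decaying c"
  shows "(\<lambda>k. cmod (c k)) summable_on UNIV"
proof -
  obtain B where B: "B \<ge> 0" "\<And>k. cmod (c k) \<le> B * wt k" using RD_wt0E[OF assms] by blast
  have "(\<lambda>k. B * wt k) summable_on UNIV" by (intro summable_on_cmult_right wt_summable)
  then show ?thesis by (rule summable_on_comparison_test) (use B in auto)
qed

lemma RD_summable:
  fixes c :: "'d::finite fseq"
  assumes "rapidly_decaying c"
  shows "c summable_on UNIV"
  by (rule abs_summable_summable[OF RD_norm_summable[OF assms]])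

lemma RD_imp_SG: "rapidly_decaying c \<Longrightarrow> slowly_growing c"
proof -
  assume "rapidly_decaying c"
  then obtain C where "\<And>k. cmod (c k) * (1 + kabs k) ^ 0 \<le> C" unfolding rapidly_decaying_def by blast
  then have "\<And>k. cmod (c k) \<le> C * (1 + kabs k) ^ 0" by simp
  then show ?thesis unfolding slowly_growing_def by blast
qed

lemma SG_mult_RD:
  assumes "slowly_growing a" "rapidly_decaying b"
  shows "rapidly_decaying (\<lambda>k. a k * b k)"
  unfolding rapidly_decaying_def
proof
  fix N
  obtain Ca Na where A: "Ca \<ge> 0" "\<And>k. cmod (a k) \<le> Ca * (1 + kabs k) ^ Na"
    using SG_boundE[OF assms(1)] by blast
  obtain Cb where B: "Cb \<ge> 0" "\<And>k. cmod (b k) * (1 + kabs k) ^ (N + Na) \<le> Cb"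
    using RD_boundE[OF assms(2)] by blast
  have "cmod (a k * b k) * (1 + kabs k) ^ N \<le> Ca * Cb" for k
  proof -
    have "cmod (a k * b k) * (1 + kabs k) ^ N \<le> (Ca * (1 + kabs k) ^ Na) * cmod (b k) * (1 + kabs k) ^ N"
      using A(2)[of k] one_kabs_pos[of k] by (simp add: norm_mult mult_right_mono)
    also have "\<dots> = Ca * (cmod (b k) * (1 + kabs k) ^ (N + Na))"
      by (simp add: power_add algebra_simps)
    also have "\<dots> \<le> Ca * Cb" using B(2)[of k] A(1) by (simp add: mult_left_mono)
    finally show ?thesis .
  qed
  then show "\<exists>C. \<forall>k. cmod (a k * b k) * (1 + kabs k) ^ N \<le> C" by blast
qed

lemma SG_mult:
  assumes "slowly_growing a" "slowly_growing b"
  shows "slowly_growing (\<lambda>k. a k * b k)"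
proof -
  obtain Ca Na where A: "Ca \<ge> 0" "\<And>k. cmod (a k) \<le> Ca * (1 + kabs k) ^ Na"
    using SG_boundE[OF assms(1)] by blast
  obtain Cb Nb where B: "Cb \<ge> 0" "\<And>k. cmod (b k) \<le> Cb * (1 + kabs k) ^ Nb"
    using SG_boundE[OF assms(2)] by blast
  have "cmod (a k * b k) \<le> (Ca * Cb) * (1 + kabs k) ^ (Na + Nb)" for k
  proof -
    have "cmod (a k * b k) \<le> (Ca * (1 + kabs k) ^ Na) * (Cb * (1 + kabs k) ^ Nb)"
      unfolding norm_mult using A B one_kabs_pos[of k] by (intro mult_mono) auto
    then show ?thesis by (simp add: power_add algebra_simps)
  qed
  then show ?thesis unfolding slowly_growing_def by blast
qed

lemma SG_add:
  assumes "slowly_growing a" "slowly_growing b"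
  shows "slowly_growing (\<lambda>k. a k + b k)"
proof -
  obtain Ca Na where A: "Ca \<ge> 0" "\<And>k. cmod (a k) \<le> Ca * (1 + kabs k) ^ Na"
    using SG_boundE[OF assms(1)] by blast
  obtain Cb Nb where B: "Cb \<ge> 0" "\<And>k. cmod (b k) \<le> Cb * (1 + kabs k) ^ Nb"
    using SG_boundE[OF assms(2)] by blast
  have "cmod (a k + b k) \<le> (Ca + Cb) * (1 + kabs k) ^ (Na + Nb)" for k
  proof -
    have "cmod (a k + b k) \<le> Ca * (1 + kabs k) ^ Na + Cb * (1 + kabs k) ^ Nb"
      using A(2)[of k] B(2)[of k] norm_triangle_ineq[of "a k" "b k"] by linarith
    also have "\<dots> \<le> Ca * (1 + kabs k) ^ (Na + Nb) + Cb * (1 + kabs k) ^ (Na + Nb)"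
      using A(1) B(1) one_kabs_pow_mono[of Na "Na+Nb" k] one_kabs_pow_mono[of Nb "Na+Nb" k]
      by (intro add_mono mult_left_mono) auto
    finally show ?thesis by (simp add: algebra_simps)
  qed
  then show ?thesis unfolding slowly_growing_def by blast
qed

lemma SG_bounded: "(\<And>k. cmod (c k) \<le> B) \<Longrightarrow> slowly_growing c"
  unfolding slowly_growing_def by (rule exI[of _ B], rule exI[of _ 0]) simp

lemma SG_const: "slowly_growing (\<lambda>k. a)"
  by (rule SG_bounded[of _ "cmod a"]) simp

lemma SG_cmult: "slowly_growing b \<Longrightarrow> slowly_growing (\<lambda>k. a * b k)"
  using SG_mult[OF SG_const] by blast

lemma SG_zero: "slowly_growing (\<lambda>k. 0)" by (rule SG_bounded[of _ 0]) simp

lemma RD_finite_support: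
  assumes "finite S" "\<And>k. k \<notin> S \<Longrightarrow> c k = 0"
  shows "rapidly_decaying c"
  unfolding rapidly_decaying_def
proof
  fix N
  have "cmod (c k) * (1 + kabs k) ^ N \<le> (\<Sum>j\<in>S. cmod (c j) * (1 + kabs j) ^ N)" for k
  proof (cases "k \<in> S")
    case True
    then show ?thesis using assms(1) one_kabs_pos
      by (intro member_le_sum) (auto intro!: mult_nonneg_nonneg zero_le_power one_kabs_pos[THEN less_imp_le])
  next
    case False
    then show ?thesis using assms one_kabs_pos by (auto intro!: sum_nonneg mult_nonneg_nonneg zero_le_power one_kabs_pos[THEN less_imp_le])
  qed
  then show "\<exists>C. \<forall>k. cmod (c k) * (1 + kabs k) ^ N \<le> C" by blast
qed

lemma SG_kneg: "slowly_growing c \<Longrightarrow> slowly_growing (\<lambda>k. c (kneg k))"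
  unfolding slowly_growing_def by (metis kabs_kneg)

lemma RD_kneg: "rapidly_decaying c \<Longrightarrow> rapidly_decaying (\<lambda>k. c (kneg k))"
  unfolding rapidly_decaying_def by (metis kabs_kneg)

lemma herm_add: "hermitian a \<Longrightarrow> hermitian b \<Longrightarrow> hermitian (\<lambda>k. a k + b k)"
  unfolding hermitian_def by simp
lemma herm_mult: "hermitian a \<Longrightarrow> hermitian b \<Longrightarrow> hermitian (\<lambda>k. a k * b k)"
  unfolding hermitian_def by simp
lemma herm_rscale: "hermitian a \<Longrightarrow> hermitian (\<lambda>k. of_real c * a k)"
  unfolding hermitian_def by simp
lemma herm_zero: "hermitian (\<lambda>k. 0)"
  unfolding hermitian_def by simp
lemma herm_diff: "hermitian a \<Longrightarrow> hermitian b \<Longrightarrow> hermitian (\<lambda>k. a k - b k)"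
  unfolding hermitian_def by simp

lemma herm_zero_iff: "hermitian L \<Longrightarrow> L (kneg k) = 0 \<longleftrightarrow> L k = 0"
  unfolding hermitian_def by simp

lemma herm_pinv: "hermitian L \<Longrightarrow> hermitian (pinv L)"
  unfolding hermitian_def pinv_def by simp

lemma herm_proj: "hermitian L \<Longrightarrow> hermitian f \<Longrightarrow> hermitian (proj_null L f)"
  unfolding hermitian_def proj_null_def by simp

lemma herm_kneg: "hermitian a \<Longrightarrow> hermitian (\<lambda>k. a (kneg k))"
  unfolding hermitian_def by simp

lemma Sspace_sub_Sdual: "Sspace \<subseteq> Sdual"
  unfolding Sspace_def Sdual_def using RD_imp_SG by blast

lemma Sdual_add: "a \<in> Sdual \<Longrightarrow> b \<in> Sdual \<Longrightarrow> (\<lambda>k. a k + b k) \<in> Sdual"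
  unfolding Sdual_def by (auto intro: SG_add herm_add)
lemma Sdual_rscale: "a \<in> Sdual \<Longrightarrow> (\<lambda>k. of_real c * a k) \<in> Sdual"
  unfolding Sdual_def by (auto intro: SG_cmult herm_rscale)
lemma Sdual_zero: "(\<lambda>k. 0) \<in> Sdual"
  unfolding Sdual_def by (auto intro: SG_zero herm_zero)
lemma Sdual_diff: "a \<in> Sdual \<Longrightarrow> b \<in> Sdual \<Longrightarrow> (\<lambda>k. a k - b k) \<in> Sdual"
  using Sdual_add[of a "\<lambda>k. of_real (-1) * b k"] Sdual_rscale[of b "-1"] by simp
lemma Sdual_mult: "a \<in> LSI \<Longrightarrow> b \<in> Sdual \<Longrightarrow> (\<lambda>k. a k * b k) \<in> Sdual"
  unfolding Sdual_def LSI_def by (auto intro: SG_mult herm_mult)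
lemma Sspace_mult: "a \<in> LSI \<Longrightarrow> b \<in> Sspace \<Longrightarrow> (\<lambda>k. a k * b k) \<in> Sspace"
  unfolding Sspace_def LSI_def by (auto intro: SG_mult_RD herm_mult)


lemma cmod_cis_mult: "cmod (a * cis t) = cmod a" by (simp add: norm_mult)

lemma eval_norm_summable:
  fixes \<phi> :: "'d::finite fseq"
  assumes "rapidly_decaying \<phi>"
  shows "(\<lambda>k. cmod (\<phi> k * cis (inner_xk x k))) summable_on UNIV"
  using RD_norm_summable[OF assms] by (simp add: norm_mult)

lemma eval_summable:
  fixes \<phi> :: "'d::finite fseq"
  assumes "rapidly_decaying \<phi>"
  shows "(\<lambda>k. \<phi> k * cis (inner_xk x k)) summable_on UNIV"
  by (rule abs_summable_summable[OF eval_norm_summable[OF assms]])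

lemma eval_bound:
  fixes \<phi> :: "'d::finite fseq"
  assumes "rapidly_decaying \<phi>"
  shows "cmod (eval_fun \<phi> x) \<le> infsum (\<lambda>k. cmod (\<phi> k)) UNIV"
proof -
  have "cmod (eval_fun \<phi> x) \<le> infsum (\<lambda>k. cmod (\<phi> k * cis (inner_xk x k))) UNIV"
    unfolding eval_fun_def by (rule norm_infsum_bound[OF eval_norm_summable[OF assms]])
  then show ?thesis by (simp add: norm_mult)
qed

lemma sup_bdd:
  fixes \<phi> :: "'d::finite fseq"
  assumes "rapidly_decaying \<phi>"
  shows "bdd_above (range (\<lambda>x. cmod (eval_fun \<phi> x)))"
  using eval_bound[OF assms] by (intro bdd_aboveI2) auto

lemma le_sup_norm:
  fixes \<phi> :: "'d::finite fseq"
  assumes "rapidly_decaying \<phi>"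
  shows "cmod (eval_fun \<phi> x) \<le> sup_norm \<phi>"
  unfolding sup_norm_def by (rule cSUP_upper[OF _ sup_bdd[OF assms]]) simp

lemma sup_norm_le:
  fixes \<phi> :: "'d::finite fseq"
  assumes "\<And>x. cmod (eval_fun \<phi> x) \<le> B"
  shows "sup_norm \<phi> \<le> B"
  unfolding sup_norm_def by (rule cSUP_least) (use assms in auto)

lemma sup_norm_nonneg:
  fixes \<phi> :: "'d::finite fseq"
  assumes "rapidly_decaying \<phi>"
  shows "0 \<le> sup_norm \<phi>"
  using le_sup_norm[OF assms] norm_ge_zero order_trans by blast

lemma sup_norm_le_l1:
  fixes \<phi> :: "'d::finite fseq"
  assumes "rapidly_decaying \<phi>"
  shows "sup_norm \<phi> \<le> infsum (\<lambda>k. cmod (\<phi> k)) UNIV"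
  by (rule sup_norm_le[OF eval_bound[OF assms]])

lemma eval_fun_scale: "eval_fun (\<lambda>k. c * \<phi> k) x = c * eval_fun \<phi> x"
  unfolding eval_fun_def by (simp add: mult.assoc infsum_cmult_right')

lemma RD_cmult: "rapidly_decaying \<phi> \<Longrightarrow> rapidly_decaying (\<lambda>k. c * \<phi> k)"
  using SG_mult_RD[OF SG_const] by blast

lemma sup_norm_scale:
  fixes \<phi> :: "'d::finite fseq"
  assumes "rapidly_decaying \<phi>"
  shows "sup_norm (\<lambda>k. of_real c * \<phi> k) = \<bar>c\<bar> * sup_norm \<phi>"
proof (cases "c = 0")
  case True
  have "sup_norm (\<lambda>k. 0 :: complex) = 0" for dummy :: 'd
    unfolding sup_norm_def eval_fun_def by simp
  then show ?thesis using True by (simp add: sup_norm_def eval_fun_def)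
next
  case False
  have RD': "rapidly_decaying (\<lambda>k. of_real c * \<phi> k)" by (rule RD_cmult[OF assms])
  have le1: "sup_norm (\<lambda>k. of_real c * \<phi> k) \<le> \<bar>c\<bar> * sup_norm \<phi>"
    by (rule sup_norm_le) (auto simp: eval_fun_scale norm_mult intro!: mult_left_mono le_sup_norm[OF assms])
  have "sup_norm \<phi> = sup_norm (\<lambda>k. of_real (1/c) * (of_real c * \<phi> k))"
    using False by simp
  also have "\<dots> \<le> \<bar>1/c\<bar> * sup_norm (\<lambda>k. of_real c * \<phi> k)"
  proof (rule sup_norm_le)
    fix x
    have "cmod (eval_fun (\<lambda>k. of_real (1/c) * (of_real c * \<phi> k)) x)
          = \<bar>1/c\<bar> * cmod (eval_fun (\<lambda>k. of_real c * \<phi> k) x)"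
      by (subst eval_fun_scale) (simp only: norm_mult norm_of_real)
    also have "\<dots> \<le> \<bar>1/c\<bar> * sup_norm (\<lambda>k. of_real c * \<phi> k)"
      by (intro mult_left_mono le_sup_norm[OF RD']) auto
    finally show "cmod (eval_fun (\<lambda>k. of_real (1/c) * (of_real c * \<phi> k)) x)
          \<le> \<bar>1/c\<bar> * sup_norm (\<lambda>k. of_real c * \<phi> k)" .
  qed
  finally have "\<bar>c\<bar> * sup_norm \<phi> \<le> sup_norm (\<lambda>k. of_real c * \<phi> k)"
    using False by (simp add: field_simps)
  with le1 show ?thesis by linarith
qed

subsection \<open>The grid argument\<close>

lemma cis_sum: "cis (\<Sum>i\<in>A. f i) = (\<Prod>i\<in>A. cis (f i))"
proof (induction A rule: infinite_finite_induct)
  case (insert x F) then show ?case by (simp add: cis_mult[symmetric])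
qed auto

lemma cis_eq_1_dvd:
  assumes "N > 0" "cis (2 * pi * real_of_int v / real N) = 1"
  shows "int N dvd v"
proof -
  have "exp (\<i> * complex_of_real (2 * pi * real_of_int v / real N)) = 1"
    using assms(2) by (simp add: cis_conv_exp)
  then obtain n :: int where n: "2 * pi * real_of_int v / real N = of_int (2 * n) * pi"
    unfolding exp_eq_1 by auto
  then have "real_of_int v = real_of_int n * real N" using assms(1) pi_gt_zero
    by (simp add: field_simps)
  then have "v = n * int N" by (metis of_int_eq_iff of_int_mult of_int_of_nat_eq)
  then show ?thesis by simp
qed

lemma geom1:
  assumes "N > 0"
  shows "(\<Sum>t<N. cis (2 * pi * real t * real_of_int v / real N)) = (if int N dvd v then of_nat N else 0)"
proof -
  define z where "z = cis (2 * pi * real_of_int v / real N)"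
  have zt: "cis (2 * pi * real t * real_of_int v / real N) = z ^ t" for t
    unfolding z_def Complex.DeMoivre by (rule arg_cong[where f=cis]) (simp add: field_simps)
  show ?thesis
  proof (cases "int N dvd v")
    case True
    then obtain q where q: "v = int N * q" by blast
    have "cis (2 * pi * real t * real_of_int v / real N) = 1" for t
    proof -
      have "2 * pi * real t * real_of_int v / real N = 2 * pi * (of_int (int t * q))"
        using assms by (simp add: q field_simps)
      then show ?thesis by (simp del: of_int_mult)
    qed
    then show ?thesis using True by simp
  next
    case False
    then have z1: "z \<noteq> 1" using cis_eq_1_dvd[OF assms] unfolding z_def by blast
    have "z ^ N = cis (2 * pi * of_int v)" unfolding z_def Complex.DeMoivre using assms by (simp add: field_simps)
    also have "\<dots> = 1" by simp
    finally have "z ^ N = 1" .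
    then show ?thesis using False z1 by (simp add: zt sum_gp_strict)
  qed
qed

definition grid :: "nat \<Rightarrow> ('d::finite \<Rightarrow> nat) set" where
  "grid N = PiE UNIV (\<lambda>_. {..<N})"

definition gpt :: "nat \<Rightarrow> ('d::finite \<Rightarrow> nat) \<Rightarrow> ('d \<Rightarrow> real)" where
  "gpt N j = (\<lambda>i. 2 * pi * real (j i) / real N)"

lemma finite_grid: "finite (grid N)"
  unfolding grid_def by (intro finite_PiE) auto

lemma card_grid: "card (grid N :: ('d::finite \<Rightarrow> nat) set) = N ^ CARD('d)"
  unfolding grid_def by (simp add: card_PiE)

lemma grid_sum:
  assumes "N > 0"
  shows "(\<Sum>j\<in>(grid N :: ('d::finite \<Rightarrow> nat) set). cis (inner_xk (gpt N j) v))
         = (if (\<forall>i. int N dvd v i) then of_nat N ^ CARD('d) else 0)"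
proof -
  have "(\<Sum>j\<in>(grid N :: ('d \<Rightarrow> nat) set). cis (inner_xk (gpt N j) v))
      = (\<Sum>j\<in>(grid N :: ('d \<Rightarrow> nat) set). \<Prod>i\<in>UNIV. cis (2 * pi * real (j i) * real_of_int (v i) / real N))"
    unfolding inner_xk_def gpt_def cis_sum by simp
  also have "\<dots> = (\<Prod>i\<in>(UNIV::'d set). \<Sum>t<N. cis (2 * pi * real t * real_of_int (v i) / real N))"
    unfolding grid_def by (subst prod_sum_PiE) auto
  also have "\<dots> = (\<Prod>i\<in>(UNIV::'d set). (if int N dvd v i then of_nat N else 0))"
    using geom1[OF assms] by simp
  also have "\<dots> = (if (\<forall>i. int N dvd v i) then of_nat N ^ CARD('d) else 0)"
  proof (cases "\<forall>i. int N dvd v i")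
    case True then show ?thesis by simp
  next
    case False
    then obtain i where "\<not> int N dvd v i" by blast
    then show ?thesis using False by (auto intro!: prod_zero)
  qed
  finally show ?thesis .
qed

lemma infsum_finsum:
  assumes "finite J" "\<And>j. j \<in> J \<Longrightarrow> (F j :: 'a \<Rightarrow> complex) summable_on A"
  shows "(\<Sum>j\<in>J. infsum (F j) A) = infsum (\<lambda>m. \<Sum>j\<in>J. F j m) A"
    and "(\<lambda>m. \<Sum>j\<in>J. F j m) summable_on A"
  using assms
proof (induction J rule: finite_induct)
  case empty
  { case 1 then show ?case by simp }
  { case 2 then show ?case by simp }
next
  case (insert x F')
  { case 1
    then show ?case using insert by (simp add: infsum_add summable_on_add)
  }
  { case 2 then show ?case using insert by (simp add: summable_on_add) }
qed

lemma inner_xk_diff: "inner_xk x m - inner_xk x k = inner_xk x (\<lambda>i. m i - k i)"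
  unfolding inner_xk_def by (simp add: sum_subtractf[symmetric] algebra_simps)


lemma norm_summable_subset:
  fixes f :: "'a \<Rightarrow> complex"
  assumes "(\<lambda>m. cmod (f m)) summable_on UNIV"
  shows "(\<lambda>m. cmod (f m)) summable_on A" "f summable_on A"
proof -
  show 1: "(\<lambda>m. cmod (f m)) summable_on A"
    using assms by (rule summable_on_subset_banach) auto
  show "f summable_on A" by (rule abs_summable_summable[OF 1])
qed

lemma coeff_le_sup:
  fixes \<phi> :: "'d::finite fseq"
  assumes RD: "rapidly_decaying \<phi>"
  shows "cmod (\<phi> k) \<le> sup_norm \<phi>"
proof -
  obtain B where B0: "B \<ge> 0" and Bb: "\<And>m. cmod (\<phi> m) \<le> B * wt m / (1 + kabs m)"
    using RD_wtE[OF RD] by blast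
  define S where "S = infsum wt (UNIV :: ('d \<Rightarrow> int) set)"
  have wt_nn: "\<And>m. 0 \<le> wt m" using wt_pos less_imp_le by blast
  have S0: "0 \<le> S" unfolding S_def by (rule infsum_nonneg) (use wt_nn in auto)
  have nsum: "(\<lambda>m. cmod (\<phi> m)) summable_on UNIV" by (rule RD_norm_summable[OF RD])
  have key: "cmod (\<phi> k) \<le> sup_norm \<phi> + B * S / (1 + real N - kabs k)" if NK: "real N > kabs k" for N :: nat
  proof -
    have N0: "N > 0" using NK kabs_nonneg[of k] by (cases N) auto
    define D where "D = 1 + real N - kabs k"
    have D0: "D > 0" unfolding D_def using NK by simp
    define \<delta> :: "('d \<Rightarrow> int) \<Rightarrow> complex" where
      "\<delta> m = (if \<forall>i. int N dvd (m i - k i) then 1 else 0)" for m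
    define A where "A = (1 / of_nat N ^ CARD('d)) *
        (\<Sum>j\<in>(grid N :: ('d \<Rightarrow> nat) set). eval_fun \<phi> (gpt N j) * cis (- inner_xk (gpt N j) k))"
    have Npow: "(of_nat N ^ CARD('d) :: complex) \<noteq> 0" using N0 by simp
    have A1: "cmod A \<le> sup_norm \<phi>"
    proof -
      have "cmod (\<Sum>j\<in>(grid N :: ('d \<Rightarrow> nat) set). eval_fun \<phi> (gpt N j) * cis (- inner_xk (gpt N j) k))
            \<le> (\<Sum>j\<in>(grid N :: ('d \<Rightarrow> nat) set). cmod (eval_fun \<phi> (gpt N j) * cis (- inner_xk (gpt N j) k)))"
        by (rule norm_sum)
      also have "\<dots> \<le> (\<Sum>j\<in>(grid N :: ('d \<Rightarrow> nat) set). sup_norm \<phi>)"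
        by (intro sum_mono) (simp add: norm_mult le_sup_norm[OF RD])
      also have "\<dots> = real N ^ CARD('d) * sup_norm \<phi>" by (simp add: card_grid)
      finally have "cmod (\<Sum>j\<in>(grid N :: ('d \<Rightarrow> nat) set). eval_fun \<phi> (gpt N j) * cis (- inner_xk (gpt N j) k))
          \<le> real N ^ CARD('d) * sup_norm \<phi>" .
      then show ?thesis unfolding A_def using N0
        by (simp add: norm_mult norm_divide norm_power field_simps)
    qed
    define F where "F j m = \<phi> m * cis (inner_xk (gpt N j) (\<lambda>i. m i - k i))" for j m
    have Fsum: "F j summable_on UNIV" for j
      using norm_summable_subset(2)[of "F j" UNIV] nsum by (simp add: F_def norm_mult)
    have Fj: "eval_fun \<phi> (gpt N j) * cis (- inner_xk (gpt N j) k) = infsum (F j) UNIV" for j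
    proof -
      have "eval_fun \<phi> (gpt N j) * cis (- inner_xk (gpt N j) k)
           = infsum (\<lambda>m. \<phi> m * cis (inner_xk (gpt N j) m) * cis (- inner_xk (gpt N j) k)) UNIV"
        unfolding eval_fun_def by (rule infsum_cmult_left'[symmetric])
      also have "\<dots> = infsum (F j) UNIV"
        unfolding F_def by (rule infsum_cong) (simp add: mult.assoc cis_mult inner_xk_diff[symmetric])
      finally show ?thesis .
    qed
    have sumF: "(\<Sum>j\<in>(grid N :: ('d \<Rightarrow> nat) set). F j m) = of_nat N ^ CARD('d) * (\<phi> m * \<delta> m)" for m
      unfolding F_def by (simp add: sum_distrib_left[symmetric] grid_sum[OF N0] \<delta>_def)
    have A2: "A = infsum (\<lambda>m. \<phi> m * \<delta> m) UNIV"
    proof -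
      have "A = (1 / of_nat N ^ CARD('d)) * (\<Sum>j\<in>(grid N :: ('d \<Rightarrow> nat) set). infsum (F j) UNIV)"
        unfolding A_def Fj ..
      also have "\<dots> = (1 / of_nat N ^ CARD('d)) * infsum (\<lambda>m. of_nat N ^ CARD('d) * (\<phi> m * \<delta> m)) UNIV"
        by (subst infsum_finsum(1)[OF finite_grid Fsum]) (simp add: sumF)
      also have "\<dots> = infsum (\<lambda>m. \<phi> m * \<delta> m) UNIV"
        using Npow by (simp add: infsum_cmult_right')
      finally show ?thesis .
    qed
    have dnorm: "cmod (\<phi> m * \<delta> m) \<le> cmod (\<phi> m)" for m
      by (simp add: \<delta>_def norm_mult)
    have nsum2: "(\<lambda>m. cmod (\<phi> m * \<delta> m)) summable_on UNIV"
      by (rule summable_on_comparison_test[OF nsum]) (use dnorm in auto)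
    have dk: "\<delta> k = 1" by (simp add: \<delta>_def)
    have A4: "infsum (\<lambda>m. \<phi> m * \<delta> m) (UNIV - {k}) = A - \<phi> k"
      unfolding A2 using dk
      by (subst infsum_Diff) (auto intro: norm_summable_subset(2)[OF nsum2])
    have A5: "cmod (infsum (\<lambda>m. \<phi> m * \<delta> m) (UNIV - {k})) \<le> B * S / D"
    proof -
      have "cmod (infsum (\<lambda>m. \<phi> m * \<delta> m) (UNIV - {k})) \<le> infsum (\<lambda>m. cmod (\<phi> m * \<delta> m)) (UNIV - {k})"
        by (rule norm_infsum_bound) (rule norm_summable_subset(1)[OF nsum2])
      also have "\<dots> \<le> infsum (\<lambda>m. (B / D) * wt m) (UNIV - {k})"
      proof (rule infsum_mono)
        show "(\<lambda>m. cmod (\<phi> m * \<delta> m)) summable_on UNIV - {k}" by (rule norm_summable_subset(1)[OF nsum2])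
        show "(\<lambda>m. B / D * wt m) summable_on UNIV - {k}"
          by (rule summable_on_cmult_right) (rule summable_on_subset_banach[OF wt_summable], auto)
        fix m assume m: "m \<in> UNIV - {k}"
        show "cmod (\<phi> m * \<delta> m) \<le> B / D * wt m"
        proof (cases "\<forall>i. int N dvd (m i - k i)")
          case False
          then have "\<delta> m = 0" by (simp add: \<delta>_def)
          then show ?thesis using B0 D0 wt_nn[of m] by simp
        next
          case True
          from m have "m \<noteq> k" by simp
          then obtain i where i: "m i \<noteq> k i" by (auto simp: fun_eq_iff)
          have "int N \<le> \<bar>m i - k i\<bar>" using dvd_imp_le_int[of "m i - k i" "int N"] True i by simp
          then have "real N \<le> \<bar>real_of_int (m i) - real_of_int (k i)\<bar>"
          proof -
            have "real_of_int (int N) \<le> real_of_int \<bar>m i - k i\<bar>" using \<open>int N \<le> \<bar>m i - k i\<bar>\<close> by linarith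
            then show ?thesis by simp
          qed
          moreover have "real_of_int \<bar>m i\<bar> \<le> kabs m" "real_of_int \<bar>k i\<bar> \<le> kabs k"
            unfolding kabs_def by (rule member_le_sum, auto)+
          ultimately have "D \<le> 1 + kabs m" unfolding D_def by linarith
          then have "B * wt m / (1 + kabs m) \<le> B * wt m / D"
            using D0 B0 wt_nn[of m] by (intro divide_left_mono mult_nonneg_nonneg) auto
          then show ?thesis using Bb[of m] True by (simp add: \<delta>_def)
        qed
      qed
      also have "\<dots> = (B / D) * infsum wt (UNIV - {k})"
        by (rule infsum_cmult_right') 
      also have "\<dots> \<le> (B / D) * S"
        unfolding S_def using B0 D0
        by (intro mult_left_mono infsum_mono2 summable_on_subset_banach[OF wt_summable]) (auto simp: wt_nn)
      finally show ?thesis by simp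
    qed
    have "cmod (\<phi> k) \<le> cmod A + cmod (A - \<phi> k)"
      using norm_triangle_ineq4[of A "A - \<phi> k"] by simp
    also have "\<dots> \<le> sup_norm \<phi> + B * S / D"
      using A1 A5 A4 by simp
    finally show ?thesis unfolding D_def .
  qed
  show ?thesis
  proof (rule field_le_epsilon)
    fix e :: real assume e: "e > 0"
    define N where "N = nat \<lceil>kabs k\<rceil> + nat \<lceil>B * S / e\<rceil> + 1"
    have NK: "real N > kabs k" unfolding N_def by linarith
    have "B * S / e \<le> 1 + real N - kabs k" unfolding N_def by linarith
    then have "B * S \<le> (1 + real N - kabs k) * e" using e by (simp add: pos_divide_le_eq)
    moreover have "0 < 1 + real N - kabs k" using NK by simp
    ultimately have "B * S / (1 + real N - kabs k) \<le> e"
      by (simp add: pos_divide_le_eq mult.commute)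
    then show "cmod (\<phi> k) \<le> sup_norm \<phi> + e" using key[OF NK] by linarith
  qed
qed


lemma infsum_single_fn:
  "infsum (\<lambda>j. if j = a then v else (0::complex)) UNIV = v"
proof -
  have "infsum (\<lambda>j. if j = a then v else (0::complex)) UNIV = infsum (\<lambda>j. if j = a then v else (0::complex)) {a}"
    by (rule infsum_cong_neutral) auto
  then show ?thesis by simp
qed

lemma infsum_single_fn_real:
  "infsum (\<lambda>j. if j = a then v else (0::real)) UNIV = v"
proof -
  have "infsum (\<lambda>j. if j = a then v else (0::real)) UNIV = infsum (\<lambda>j. if j = a then v else (0::real)) {a}"
    by (rule infsum_cong_neutral) auto
  then show ?thesis by simp
qed

lemma summable_single_fn: "(\<lambda>j. if j = a then v else (0::'b::{topological_comm_monoid_add})) summable_on UNIV"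
  by (rule finite_nonzero_values_imp_summable_on) (auto intro: finite_subset[of _ "{a}"])

lemma inner_xk_kneg: "inner_xk x (kneg k) = - inner_xk x k"
  unfolding inner_xk_def kneg_def by (simp add: sum_negf)

lemma inner_xk_zero: "inner_xk x (\<lambda>_. 0) = 0"
  unfolding inner_xk_def by simp

subsection \<open>Pairing\<close>

lemma pair_RD:
  "slowly_growing f \<Longrightarrow> rapidly_decaying \<phi> \<Longrightarrow> rapidly_decaying (\<lambda>k. f k * \<phi> (kneg k))"
  using SG_mult_RD RD_kneg by blast

lemma pair_norm_summable:
  fixes f :: "'d::finite fseq"
  shows "slowly_growing f \<Longrightarrow> rapidly_decaying \<phi> \<Longrightarrow> (\<lambda>k. cmod (f k * \<phi> (kneg k))) summable_on UNIV"
  using RD_norm_summable pair_RD by blast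

lemma pair_summable:
  fixes f :: "'d::finite fseq"
  shows "slowly_growing f \<Longrightarrow> rapidly_decaying \<phi> \<Longrightarrow> (\<lambda>k. f k * \<phi> (kneg k)) summable_on UNIV"
  using RD_summable pair_RD by blast

lemma pairing_add1:
  fixes f g :: "'d::finite fseq"
  assumes "slowly_growing f" "slowly_growing g" "rapidly_decaying \<phi>"
  shows "pairing (\<lambda>k. f k + g k) \<phi> = pairing f \<phi> + pairing g \<phi>"
proof -
  have "infsum (\<lambda>k. (f k + g k) * \<phi> (kneg k)) UNIV
      = infsum (\<lambda>k. f k * \<phi> (kneg k) + g k * \<phi> (kneg k)) UNIV"
    by (simp add: distrib_right)
  also have "\<dots> = infsum (\<lambda>k. f k * \<phi> (kneg k)) UNIV + infsum (\<lambda>k. g k * \<phi> (kneg k)) UNIV"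
    by (rule infsum_add) (use pair_summable assms in auto)
  finally show ?thesis unfolding pairing_def by simp
qed

lemma pairing_scale1: "pairing (\<lambda>k. of_real c * f k) \<phi> = c * pairing f \<phi>"
  unfolding pairing_def by (simp add: mult.assoc infsum_cmult_right')

lemma pairing_scale2: "pairing f (\<lambda>k. of_real c * \<phi> k) = c * pairing f \<phi>"
  unfolding pairing_def by (simp add: mult.left_commute infsum_cmult_right')

lemma pairing_zero1: "pairing (\<lambda>k. 0) \<phi> = 0"
  unfolding pairing_def by simp

lemma pairing_zero2: "pairing f (\<lambda>k. 0) = 0"
  unfolding pairing_def by simp

lemma pairing_abs_bound:
  fixes f :: "'d::finite fseq"
  assumes "slowly_growing f" "rapidly_decaying \<phi>"
  shows "\<bar>pairing f \<phi>\<bar> \<le> infsum (\<lambda>k. cmod (f k * \<phi> (kneg k))) UNIV"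
proof -
  have "\<bar>pairing f \<phi>\<bar> \<le> cmod (infsum (\<lambda>k. f k * \<phi> (kneg k)) UNIV)"
    unfolding pairing_def by (rule abs_Re_le_cmod)
  also have "\<dots> \<le> infsum (\<lambda>k. cmod (f k * \<phi> (kneg k))) UNIV"
    by (rule norm_infsum_bound[OF pair_norm_summable[OF assms]])
  finally show ?thesis .
qed

definition e0 :: "'d::finite fseq" where
  "e0 = (\<lambda>k. if k = (\<lambda>_. 0) then 1 else 0)"

lemma kneg_swap: "kneg j = k \<longleftrightarrow> j = kneg k" by auto

lemma kneg_eq_zero_iff: "kneg k = (\<lambda>_. 0) \<longleftrightarrow> k = (\<lambda>_. 0)"
  unfolding kneg_def by (auto simp: fun_eq_iff)

lemma e0_Sspace: "e0 \<in> Sspace"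
  unfolding Sspace_def
proof (intro CollectI conjI)
  show "rapidly_decaying e0" by (rule RD_finite_support[of "{\<lambda>_. 0}"]) (auto simp: e0_def)
  show "hermitian e0" unfolding hermitian_def e0_def by (auto simp: kneg_eq_zero_iff)
qed

lemma eval_e0: "eval_fun e0 (x::'d::finite \<Rightarrow> real) = 1"
proof -
  have "eval_fun e0 x = infsum (\<lambda>k::'d\<Rightarrow>int. if k = (\<lambda>_. 0) then cis (inner_xk x (\<lambda>_. 0)) else 0) UNIV"
    unfolding eval_fun_def e0_def by (rule infsum_cong) auto
  also have "\<dots> = 1" by (simp add: infsum_single_fn inner_xk_zero)
  finally show ?thesis .
qed

lemma sup_norm_e0: "sup_norm e0 = 1"
  unfolding sup_norm_def eval_e0 by simp

subsection \<open>Measures\<close>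

definition Sw :: "'d::finite fseq \<Rightarrow> real set" where
  "Sw w = {pairing w \<phi> |\<phi>. \<phi> \<in> Sspace \<and> sup_norm \<phi> = 1}"

lemma Mset_Sw: "Mset = {w \<in> Sdual. bdd_above (Sw w)}"
  unfolding Mset_def Sw_def ..

lemma Mnorm_Sw: "Mnorm w = Sup (Sw w)"
  unfolding Mnorm_def Sw_def ..

lemma Sw_nonempty: "Sw w \<noteq> {}"
  unfolding Sw_def using e0_Sspace sup_norm_e0 by blast

lemma Mset_Sdual: "w \<in> Mset \<Longrightarrow> w \<in> Sdual"
  unfolding Mset_def by blast

lemma Mset_SG: "w \<in> Mset \<Longrightarrow> slowly_growing w"
  unfolding Mset_def Sdual_def by blast

lemma Mnorm_upper:
  assumes "w \<in> Mset" "\<phi> \<in> Sspace" "sup_norm \<phi> = 1"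
  shows "pairing w \<phi> \<le> Mnorm w"
  unfolding Mnorm_Sw using assms unfolding Mset_Sw
  by (intro cSup_upper) (auto simp: Sw_def)

lemma Sspace_RD: "\<phi> \<in> Sspace \<Longrightarrow> rapidly_decaying \<phi>"
  unfolding Sspace_def by blast

lemma Sspace_scale: "\<phi> \<in> Sspace \<Longrightarrow> (\<lambda>k. of_real c * \<phi> k) \<in> Sspace"
  unfolding Sspace_def by (auto intro: RD_cmult herm_rscale)

lemma sup_norm_zero_imp:
  assumes "\<phi> \<in> Sspace" "sup_norm \<phi> = 0"
  shows "\<phi> = (\<lambda>k. 0)"
  using coeff_le_sup[OF Sspace_RD[OF assms(1)]] assms(2) by (auto simp: fun_eq_iff)

lemma pairing_le_Mnorm:
  assumes w: "w \<in> Mset" and \<phi>: "\<phi> \<in> Sspace"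
  shows "pairing w \<phi> \<le> Mnorm w * sup_norm \<phi>"
proof (cases "sup_norm \<phi> = 0")
  case True
  then show ?thesis using sup_norm_zero_imp[OF \<phi>] by (simp add: pairing_zero2)
next
  case False
  define s where "s = sup_norm \<phi>"
  have s0: "s > 0" using False sup_norm_nonneg[OF Sspace_RD[OF \<phi>]] unfolding s_def by simp
  define \<psi> where "\<psi> = (\<lambda>k. of_real (1/s) * \<phi> k)"
  have \<psi>: "\<psi> \<in> Sspace" unfolding \<psi>_def by (rule Sspace_scale[OF \<phi>])
  have "sup_norm \<psi> = \<bar>1/s\<bar> * s" unfolding \<psi>_def s_def by (rule sup_norm_scale[OF Sspace_RD[OF \<phi>]])
  then have s1: "sup_norm \<psi> = 1" using s0 by simp
  have "pairing w \<psi> = (1/s) * pairing w \<phi>" unfolding \<psi>_def by (rule pairing_scale2)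
  then have "(1/s) * pairing w \<phi> \<le> Mnorm w" using Mnorm_upper[OF w \<psi> s1] by simp
  then show ?thesis using s0 unfolding s_def by (simp add: field_simps)
qed

lemma abs_pairing_le_Mnorm:
  assumes w: "w \<in> Mset" and \<phi>: "\<phi> \<in> Sspace"
  shows "\<bar>pairing w \<phi>\<bar> \<le> Mnorm w * sup_norm \<phi>"
proof -
  have m: "(\<lambda>k. of_real (-1) * \<phi> k) \<in> Sspace" by (rule Sspace_scale[OF \<phi>])
  have "sup_norm (\<lambda>k. of_real (-1) * \<phi> k) = sup_norm \<phi>"
    using sup_norm_scale[OF Sspace_RD[OF \<phi>], of "-1"] by simp
  then have "- pairing w \<phi> \<le> Mnorm w * sup_norm \<phi>"
    using pairing_le_Mnorm[OF w m] pairing_scale2[of w "-1" \<phi>] by simp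
  then show ?thesis using pairing_le_Mnorm[OF w \<phi>] by linarith
qed

lemma Mnorm_nonneg:
  fixes w :: "'d::finite fseq"
  assumes "w \<in> Mset"
  shows "0 \<le> Mnorm w"
proof -
  have "\<bar>pairing w e0\<bar> \<le> Mnorm w * sup_norm (e0 :: 'd fseq)"
    by (rule abs_pairing_le_Mnorm[OF assms e0_Sspace])
  moreover have "sup_norm (e0::'d fseq) = 1" by (rule sup_norm_e0)
  ultimately show ?thesis using abs_ge_zero[of "pairing w e0"] by simp
qed

lemma Mset_intro:
  assumes "w \<in> Sdual" "\<And>\<phi>. \<phi> \<in> Sspace \<Longrightarrow> pairing w \<phi> \<le> B * sup_norm \<phi>"
  shows "w \<in> Mset" "Mnorm w \<le> B"
proof -
  have b: "x \<le> B" if xin: "x \<in> Sw w" for x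
  proof -
    obtain \<phi> where "x = pairing w \<phi>" "\<phi> \<in> Sspace" "sup_norm \<phi> = 1" using xin unfolding Sw_def by blast
    then show ?thesis using assms(2)[of \<phi>] by simp
  qed
  have "bdd_above (Sw w)" by (rule bdd_aboveI[OF b])
  then show "w \<in> Mset" unfolding Mset_Sw using assms(1) by blast
  show "Mnorm w \<le> B" unfolding Mnorm_Sw by (rule cSup_least[OF Sw_nonempty b])
qed

lemma Mset_add:
  assumes "w1 \<in> Mset" "w2 \<in> Mset"
  shows "(\<lambda>k. w1 k + w2 k) \<in> Mset" "Mnorm (\<lambda>k. w1 k + w2 k) \<le> Mnorm w1 + Mnorm w2"
proof -
  have h: "pairing (\<lambda>k. w1 k + w2 k) \<phi> \<le> (Mnorm w1 + Mnorm w2) * sup_norm \<phi>" if "\<phi> \<in> Sspace" for \<phi>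
    using pairing_add1[OF Mset_SG[OF assms(1)] Mset_SG[OF assms(2)] Sspace_RD[OF that]]
      pairing_le_Mnorm[OF assms(1) that] pairing_le_Mnorm[OF assms(2) that]
    by (simp add: distrib_right)
  then show "(\<lambda>k. w1 k + w2 k) \<in> Mset" "Mnorm (\<lambda>k. w1 k + w2 k) \<le> Mnorm w1 + Mnorm w2"
    using Mset_intro[OF Sdual_add[OF Mset_Sdual[OF assms(1)] Mset_Sdual[OF assms(2)]] h] by auto
qed

lemma Mset_scale_le:
  assumes "w \<in> Mset"
  shows "(\<lambda>k. of_real c * w k) \<in> Mset" "Mnorm (\<lambda>k. of_real c * w k) \<le> \<bar>c\<bar> * Mnorm w"
proof -
  have h: "pairing (\<lambda>k. of_real c * w k) \<phi> \<le> (\<bar>c\<bar> * Mnorm w) * sup_norm \<phi>" if "\<phi> \<in> Sspace" for \<phi>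
  proof -
    have "pairing (\<lambda>k. of_real c * w k) \<phi> = c * pairing w \<phi>" by (rule pairing_scale1)
    also have "\<dots> \<le> \<bar>c\<bar> * \<bar>pairing w \<phi>\<bar>" by (simp add: abs_mult[symmetric])
    also have "\<dots> \<le> \<bar>c\<bar> * (Mnorm w * sup_norm \<phi>)"
      by (intro mult_left_mono abs_pairing_le_Mnorm[OF assms that]) auto
    finally show ?thesis by simp
  qed
  then show "(\<lambda>k. of_real c * w k) \<in> Mset" "Mnorm (\<lambda>k. of_real c * w k) \<le> \<bar>c\<bar> * Mnorm w"
    using Mset_intro[OF Sdual_rscale[OF Mset_Sdual[OF assms]] h] by auto
qed

lemma Mset_scale: "w \<in> Mset \<Longrightarrow> (\<lambda>k. of_real c * w k) \<in> Mset"
  using Mset_scale_le by blast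

lemma Mnorm_scale:
  assumes "w \<in> Mset"
  shows "Mnorm (\<lambda>k. of_real c * w k) = \<bar>c\<bar> * Mnorm w"
proof (cases "c = 0")
  case True
  have "Mnorm (\<lambda>k. of_real c * w k) \<le> 0" using Mset_scale_le(2)[OF assms, of c] True by simp
  moreover have "0 \<le> Mnorm (\<lambda>k. of_real c * w k)" by (rule Mnorm_nonneg[OF Mset_scale[OF assms]])
  ultimately show ?thesis using True by simp
next
  case False
  have "Mnorm w = Mnorm (\<lambda>k. of_real (1/c) * (of_real c * w k))" using False by simp
  also have "\<dots> \<le> \<bar>1/c\<bar> * Mnorm (\<lambda>k. of_real c * w k)"
    by (rule Mset_scale_le(2)[OF Mset_scale[OF assms]])
  finally have "\<bar>c\<bar> * Mnorm w \<le> Mnorm (\<lambda>k. of_real c * w k)" using False by (simp add: field_simps)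
  then show ?thesis using Mset_scale_le(2)[OF assms, of c] by linarith
qed

lemma Mset_diff:
  assumes "w1 \<in> Mset" "w2 \<in> Mset"
  shows "(\<lambda>k. w1 k - w2 k) \<in> Mset"
  using Mset_add(1)[OF assms(1) Mset_scale[OF assms(2), of "-1"]] by simp

lemma Mnorm_diff_le:
  assumes "w1 \<in> Mset" "w2 \<in> Mset"
  shows "Mnorm (\<lambda>k. w1 k - w2 k) \<le> Mnorm w1 + Mnorm w2"
  using Mset_add(2)[OF assms(1) Mset_scale[OF assms(2), of "-1"]] Mnorm_scale[OF assms(2), of "-1"] by simp

lemma Mset_zero: "(\<lambda>k. 0) \<in> (Mset :: 'd::finite fseq set)" "Mnorm (\<lambda>k::'d\<Rightarrow>int. 0 :: complex) = 0"
proof -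
  have h: "\<And>\<phi>::'d fseq. \<phi> \<in> Sspace \<Longrightarrow> pairing (\<lambda>k. 0) \<phi> \<le> 0 * sup_norm \<phi>"
    by (simp add: pairing_zero1)
  have a: "(\<lambda>k. 0) \<in> (Mset :: 'd fseq set)" and b: "Mnorm (\<lambda>k::'d\<Rightarrow>int. 0 :: complex) \<le> (0::real)"
    using Mset_intro[OF Sdual_zero h] by auto
  show "(\<lambda>k. 0) \<in> (Mset :: 'd fseq set)" by (rule a)
  show "Mnorm (\<lambda>k::'d\<Rightarrow>int. 0 :: complex) = (0::real)" using b Mnorm_nonneg[OF a] by linarith
qed

lemma coeff_le_Mnorm:
  fixes w :: "'d::finite fseq"
  assumes w: "w \<in> Mset"
  shows "cmod (w k) \<le> Mnorm w"
proof (cases "w k = 0")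
  case True then show ?thesis using Mnorm_nonneg[OF w] by simp
next
  case False
  have herm: "hermitian w" using Mset_Sdual[OF w] unfolding Sdual_def by blast
  define c where "c = cnj (w k) / of_real (cmod (w k))"
  define \<phi> where "\<phi> = (\<lambda>j. (if j = kneg k then c else 0) + (if j = k then cnj c else 0))"
  have \<phi>S: "\<phi> \<in> Sspace"
    unfolding Sspace_def
  proof (intro CollectI conjI)
    show "rapidly_decaying \<phi>" unfolding \<phi>_def by (rule RD_finite_support[of "{k, kneg k}"]) auto
    show "hermitian \<phi>" unfolding hermitian_def
    proof
      fix j
      have e1: "(kneg j = kneg k) = (j = k)" by simp
      have e2: "(kneg j = k) = (j = kneg k)" by (rule kneg_swap)
      show "\<phi> (kneg j) = cnj (\<phi> j)" unfolding \<phi>_def e1 e2 by (simp add: add.commute)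
    qed
  qed
  have c1: "cmod c = 1" unfolding c_def using False by (simp add: norm_divide)
  have "infsum (\<lambda>j. cmod (\<phi> j)) UNIV \<le> infsum (\<lambda>j. (if j = kneg k then 1 else 0) + (if j = k then 1 else (0::real))) UNIV"
  proof (rule infsum_mono)
    show "(\<lambda>j. cmod (\<phi> j)) summable_on UNIV" by (rule RD_norm_summable) (use \<phi>S Sspace_RD in blast)
    show "(\<lambda>j. (if j = kneg k then 1 else 0) + (if j = k then 1 else (0::real))) summable_on UNIV"
      by (intro summable_on_add summable_single_fn)
    fix j show "cmod (\<phi> j) \<le> (if j = kneg k then 1 else 0) + (if j = k then 1 else (0::real))"
    proof -
      have "cmod (\<phi> j) \<le> cmod (if j = kneg k then c else 0) + cmod (if j = k then cnj c else 0)"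
        unfolding \<phi>_def by (rule norm_triangle_ineq)
      also have "\<dots> = (if j = kneg k then 1 else 0) + (if j = k then 1 else (0::real))"
        using c1 by simp
      finally show ?thesis .
    qed
  qed
  also have "\<dots> = 2"
    by (subst infsum_add) (auto intro: summable_single_fn simp: infsum_single_fn_real)
  finally have sn: "sup_norm \<phi> \<le> 2" using sup_norm_le_l1[OF Sspace_RD[OF \<phi>S]] by linarith
  have "infsum (\<lambda>j. w j * \<phi> (kneg j)) UNIV
       = infsum (\<lambda>j. (if j = k then w k * c else 0) + (if j = kneg k then w (kneg k) * cnj c else 0)) UNIV"
  proof (rule infsum_cong)
    fix j :: "'d \<Rightarrow> int"
    have e1: "(kneg j = kneg k) = (j = k)" by simp
    have e2: "(kneg j = k) = (j = kneg k)" by (rule kneg_swap)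
    show "w j * \<phi> (kneg j) = (if j = k then w k * c else 0) + (if j = kneg k then w (kneg k) * cnj c else 0)"
      unfolding \<phi>_def e1 e2 by (simp add: distrib_left)
  qed
  also have "\<dots> = w k * c + w (kneg k) * cnj c"
    by (subst infsum_add) (auto intro: summable_single_fn simp: infsum_single_fn)
  also have "\<dots> = w k * c + cnj (w k * c)"
    using herm unfolding hermitian_def by simp
  finally have "pairing w \<phi> = 2 * Re (w k * c)" unfolding pairing_def by simp
  also have "Re (w k * c) = cmod (w k)"
  proof -
    have "w k * cnj (w k) = of_real ((cmod (w k))\<^sup>2)" by (rule complex_norm_square[symmetric])
    then have "w k * c = of_real ((cmod (w k))\<^sup>2) / of_real (cmod (w k))"
      unfolding c_def by (simp add: mult.assoc[symmetric])
    then have "w k * c = of_real ((cmod (w k))\<^sup>2 / cmod (w k))" by simp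
    then show ?thesis using False by (simp add: power2_eq_square)
  qed
  finally have "2 * cmod (w k) \<le> Mnorm w * sup_norm \<phi>" using pairing_le_Mnorm[OF w \<phi>S] by simp
  also have "\<dots> \<le> Mnorm w * 2" using sn Mnorm_nonneg[OF w] by (intro mult_left_mono) auto
  finally show ?thesis by simp
qed

lemma Mnorm_eq_0:
  assumes "w \<in> Mset" "Mnorm w = 0"
  shows "w = (\<lambda>k. 0)"
  using coeff_le_Mnorm[OF assms(1)] assms(2) by (auto simp: fun_eq_iff)

lemma Sspace_Mset:
  fixes v :: "'d::finite fseq"
  assumes v: "v \<in> Sspace"
  shows "v \<in> Mset" "Mnorm v \<le> infsum (\<lambda>k. cmod (v k)) UNIV"
proof -
  have RDv: "rapidly_decaying v" using v Sspace_RD by blast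
  have h: "pairing v \<phi> \<le> infsum (\<lambda>k. cmod (v k)) UNIV * sup_norm \<phi>" if \<phi>: "\<phi> \<in> Sspace" for \<phi>
  proof -
    have RDp: "rapidly_decaying \<phi>" using \<phi> Sspace_RD by blast
    have "pairing v \<phi> \<le> infsum (\<lambda>k. cmod (v k * \<phi> (kneg k))) UNIV"
      using pairing_abs_bound[OF RD_imp_SG[OF RDv] RDp] by linarith
    also have "\<dots> \<le> infsum (\<lambda>k. cmod (v k) * sup_norm \<phi>) UNIV"
    proof (rule infsum_mono)
      show "(\<lambda>k. cmod (v k * \<phi> (kneg k))) summable_on UNIV"
        by (rule pair_norm_summable[OF RD_imp_SG[OF RDv] RDp])
      show "(\<lambda>k. cmod (v k) * sup_norm \<phi>) summable_on UNIV"
        by (rule summable_on_cmult_left[OF RD_norm_summable[OF RDv]])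
      fix k show "cmod (v k * \<phi> (kneg k)) \<le> cmod (v k) * sup_norm \<phi>"
        unfolding norm_mult by (intro mult_left_mono coeff_le_sup[OF RDp]) auto
    qed
    also have "\<dots> = infsum (\<lambda>k. cmod (v k)) UNIV * sup_norm \<phi>"
      by (rule infsum_cmult_left')
    finally show ?thesis .
  qed
  then show "v \<in> Mset" "Mnorm v \<le> infsum (\<lambda>k. cmod (v k)) UNIV"
    using Mset_intro[OF subsetD[OF Sspace_sub_Sdual v] h] by auto
qed

lemma dirac_Sdual: "dirac_shift x \<in> Sdual"
  unfolding Sdual_def dirac_shift_def hermitian_def
  by (auto intro!: SG_bounded[of _ 1] simp: inner_xk_kneg cis_cnj)

lemma dirac_Mset: "dirac_shift x \<in> Mset" "Mnorm (dirac_shift x) \<le> 1"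
proof -
  have h: "pairing (dirac_shift x) \<phi> \<le> 1 * sup_norm \<phi>" if \<phi>: "\<phi> \<in> Sspace" for \<phi>
  proof -
    have "infsum (\<lambda>k. dirac_shift x k * \<phi> (kneg k)) UNIV
        = infsum (\<lambda>k. (\<lambda>j. \<phi> j * cis (inner_xk x j)) (kneg k)) UNIV"
      unfolding dirac_shift_def by (rule infsum_cong) (simp add: inner_xk_kneg mult.commute)
    also have "\<dots> = infsum (\<lambda>j. \<phi> j * cis (inner_xk x j)) UNIV"
      by (rule infsum_reindex_bij_betw) (rule bij_kneg)
    finally have "pairing (dirac_shift x) \<phi> = Re (eval_fun \<phi> x)"
      unfolding pairing_def eval_fun_def by simp
    also have "\<dots> \<le> cmod (eval_fun \<phi> x)" by (rule complex_Re_le_cmod)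
    also have "\<dots> \<le> sup_norm \<phi>" by (rule le_sup_norm) (use \<phi> Sspace_RD in blast)
    finally show ?thesis by simp
  qed
  then show "dirac_shift x \<in> Mset" "Mnorm (dirac_shift x) \<le> 1"
    using Mset_intro[OF dirac_Sdual h] by auto
qed


definition nnr :: "real \<Rightarrow> real \<Rightarrow> real \<Rightarrow> real" where
  "nnr r a b = (a powr r + b powr r) powr (1/r)"

definition nnp :: "ereal \<Rightarrow> real \<Rightarrow> real \<Rightarrow> real" where
  "nnp p a b = (if p = \<infinity> then max a b else nnr (real_of_ereal p) a b)"

lemma native_norm_nnp: "native_norm L p f = nnp p (Mnorm (apply_op L f)) (l2norm (proj_null L f))"
  by (simp add: native_norm_def nnp_def nnr_def)

lemma powr_inv_cancel: "(r::real) > 0 \<Longrightarrow> (X::real) \<ge> 0 \<Longrightarrow> (X powr (1/r)) powr r = X"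
  by (simp add: powr_powr)

lemma powr_inv_cancel2: "(r::real) > 0 \<Longrightarrow> (X::real) \<ge> 0 \<Longrightarrow> (X powr r) powr (1/r) = X"
  by (simp add: powr_powr)

lemma pow_le_self: "(r::real) \<ge> 1 \<Longrightarrow> 0 \<le> (u::real) \<Longrightarrow> u \<le> 1 \<Longrightarrow> u powr r \<le> u"
  by (cases "u = 0") (auto intro: powr_le_one_le)

lemma conv_powr:
  fixes r x y t :: real
  assumes r: "r \<ge> 1" and x: "0 \<le> x" and y: "0 \<le> y" and t: "0 \<le> t" "t \<le> 1"
  shows "(t * x + (1 - t) * y) powr r \<le> t * x powr r + (1 - t) * y powr r"
proof (cases "x = 0 \<or> y = 0")
  case True
  then show ?thesis
  proof
    assume x0: "x = 0"
    have "((1 - t) * y) powr r = (1 - t) powr r * y powr r" using t y by (simp add: powr_mult)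
    also have "\<dots> \<le> (1 - t) * y powr r" using t r by (intro mult_right_mono pow_le_self) auto
    finally show ?thesis using x0 r by simp
  next
    assume y0: "y = 0"
    have "(t * x) powr r = t powr r * x powr r" using t x by (simp add: powr_mult)
    also have "\<dots> \<le> t * x powr r" using t r by (intro mult_right_mono pow_le_self) auto
    finally show ?thesis using y0 r by simp
  qed
next
  case False
  then have "x \<in> {0<..}" "y \<in> {0<..}" using x y by auto
  have h0: "((1 - t) *\<^sub>R y + t *\<^sub>R x) powr r \<le> (1 - t) * y powr r + t * x powr r"
    using convex_onD[OF powr_convex[OF r], of t y x] t \<open>x \<in> {0<..}\<close> \<open>y \<in> {0<..}\<close> by simp
  have eq: "(1 - t) *\<^sub>R y + t *\<^sub>R x = t * x + (1 - t) * y" by (simp add: add.commute)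
  from h0 have "(t * x + (1 - t) * y) powr r \<le> (1 - t) * y powr r + t * x powr r" by (simp only: eq)
  then show ?thesis by linarith
qed

context
  fixes r :: real assumes r: "r \<ge> 1"
begin

lemma nnr_lower: "0 \<le> a \<Longrightarrow> 0 \<le> b \<Longrightarrow> max a b \<le> nnr r a b"
proof -
  assume a: "0 \<le> a" and b: "0 \<le> b"
  have "a = (a powr r) powr (1/r)" using r a by (simp add: powr_inv_cancel2)
  also have "\<dots> \<le> nnr r a b" unfolding nnr_def using r by (intro powr_mono2) auto
  finally have 1: "a \<le> nnr r a b" .
  have "b = (b powr r) powr (1/r)" using r b by (simp add: powr_inv_cancel2)
  also have "\<dots> \<le> nnr r a b" unfolding nnr_def using r by (intro powr_mono2) auto
  finally show ?thesis using 1 by simp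
qed

lemma nnr_upper: "0 \<le> a \<Longrightarrow> 0 \<le> b \<Longrightarrow> nnr r a b \<le> a + b"
proof -
  assume a: "0 \<le> a" and b: "0 \<le> b"
  have key: "a powr r + b powr r \<le> (a + b) powr r"
  proof (cases "a + b = 0")
    case True
    then have "a = 0" "b = 0" using a b by linarith+
    then show ?thesis using r by simp
  next
    case False
    define s where "s = a + b"
    have s: "s > 0" using False a b unfolding s_def by simp
    have "a powr r = s powr r * (a / s) powr r" using s a by (simp add: powr_divide)
    moreover have "b powr r = s powr r * (b / s) powr r" using s b by (simp add: powr_divide)
    moreover have "(a / s) powr r \<le> a / s" using a b s r by (intro pow_le_self) (auto simp: s_def)
    moreover have "(b / s) powr r \<le> b / s" using a b s r by (intro pow_le_self) (auto simp: s_def)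
    ultimately have "a powr r + b powr r \<le> s powr r * (a / s) + s powr r * (b / s)"
      by (metis add_mono mult_left_mono powr_ge_zero)
    also have "\<dots> = s powr r * ((a + b) / s)" by (simp add: add_divide_distrib distrib_left)
    also have "\<dots> = s powr r" using s by (simp add: s_def)
    finally show ?thesis unfolding s_def .
  qed
  have "nnr r a b \<le> ((a + b) powr r) powr (1/r)" unfolding nnr_def using r key
    by (intro powr_mono2) auto
  also have "\<dots> = a + b" using r a b by (simp add: powr_inv_cancel2)
  finally show ?thesis .
qed

lemma nnr_mono: "0 \<le> a \<Longrightarrow> 0 \<le> b \<Longrightarrow> a \<le> a' \<Longrightarrow> b \<le> b' \<Longrightarrow> nnr r a b \<le> nnr r a' b'"
  unfolding nnr_def using r by (intro powr_mono2 add_mono) auto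

lemma nnr_scale: "0 \<le> c \<Longrightarrow> 0 \<le> a \<Longrightarrow> 0 \<le> b \<Longrightarrow> nnr r (c * a) (c * b) = c * nnr r a b"
proof -
  assume c: "0 \<le> c" and a: "0 \<le> a" and b: "0 \<le> b"
  have "(c * a) powr r + (c * b) powr r = c powr r * (a powr r + b powr r)"
    by (simp add: powr_mult distrib_left)
  then have "nnr r (c * a) (c * b) = (c powr r) powr (1/r) * (a powr r + b powr r) powr (1/r)"
    unfolding nnr_def by (simp add: powr_mult)
  also have "(c powr r) powr (1/r) = c" using c r by (simp add: powr_inv_cancel2)
  finally show ?thesis unfolding nnr_def .
qed

lemma nnr_nonneg: "0 \<le> nnr r a b"
  unfolding nnr_def by simp

lemma nnr_triangle:
  assumes a1: "0 \<le> a1" and b1: "0 \<le> b1" and a2: "0 \<le> a2" and b2: "0 \<le> b2"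
  shows "nnr r (a1 + a2) (b1 + b2) \<le> nnr r a1 b1 + nnr r a2 b2"
proof -
  define A where "A = nnr r a1 b1"
  define B where "B = nnr r a2 b2"
  have A0: "A \<ge> 0" "B \<ge> 0" unfolding A_def B_def by (rule nnr_nonneg)+
  show ?thesis
  proof (cases "A = 0 \<or> B = 0")
    case True
    then show ?thesis
    proof
      assume "A = 0"
      then have "a1 = 0" "b1 = 0" using nnr_lower[OF a1 b1] a1 b1 unfolding A_def by auto
      then show ?thesis by (simp add: nnr_nonneg)
    next
      assume "B = 0"
      then have "a2 = 0" "b2 = 0" using nnr_lower[OF a2 b2] a2 b2 unfolding B_def by auto
      then show ?thesis by (simp add: nnr_nonneg)
    qed
  next
    case False
    then have Ap: "A > 0" and Bp: "B > 0" using A0 by auto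
    define t where "t = A / (A + B)"
    have t: "0 \<le> t" "t \<le> 1" using Ap Bp unfolding t_def by auto
    have t1: "1 - t = B / (A + B)" using Ap Bp unfolding t_def by (simp add: field_simps)
    have SA: "a1 powr r + b1 powr r = A powr r" unfolding A_def nnr_def using r
      by (simp add: powr_inv_cancel)
    have SB: "a2 powr r + b2 powr r = B powr r" unfolding B_def nnr_def using r
      by (simp add: powr_inv_cancel)
    have tA: "t * (z / A) = z / (A + B)" for z unfolding t_def using Ap by simp
    have tB: "(1 - t) * (z / B) = z / (A + B)" for z unfolding t1 using Bp by simp
    have ca: "(a1 + a2) / (A + B) = t * (a1 / A) + (1 - t) * (a2 / B)"
      unfolding tA tB by (rule add_divide_distrib)
    have cb: "(b1 + b2) / (A + B) = t * (b1 / A) + (1 - t) * (b2 / B)"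
      unfolding tA tB by (rule add_divide_distrib)
    have "((a1 + a2) / (A + B)) powr r + ((b1 + b2) / (A + B)) powr r
        \<le> (t * (a1 / A) powr r + (1 - t) * (a2 / B) powr r) + (t * (b1 / A) powr r + (1 - t) * (b2 / B) powr r)"
      unfolding ca cb using r t a1 a2 b1 b2 Ap Bp by (intro add_mono conv_powr) auto
    also have "\<dots> = t * ((a1 powr r + b1 powr r) / A powr r) + (1 - t) * ((a2 powr r + b2 powr r) / B powr r)"
      unfolding powr_divide by (simp add: add_divide_distrib algebra_simps)
    also have "\<dots> = 1" unfolding SA SB using Ap Bp by simp
    finally have H: "((a1 + a2) / (A + B)) powr r + ((b1 + b2) / (A + B)) powr r \<le> 1" .
    have "((a1 + a2) powr r + (b1 + b2) powr r) / (A + B) powr r \<le> 1"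
      using H[unfolded powr_divide] unfolding add_divide_distrib .
    then have "(a1 + a2) powr r + (b1 + b2) powr r \<le> (A + B) powr r"
      using Ap Bp by (simp add: divide_le_eq)
    then have "nnr r (a1 + a2) (b1 + b2) \<le> ((A + B) powr r) powr (1/r)"
      unfolding nnr_def using r by (intro powr_mono2) auto
    also have "\<dots> = A + B" using r Ap Bp by (simp add: powr_inv_cancel2)
    finally show ?thesis unfolding A_def B_def .
  qed
qed

end

lemma ereal_ge1_cases:
  assumes "1 \<le> (p::ereal)"
  obtains "p = \<infinity>" | r where "p = ereal r" "r \<ge> 1"
  using assms by (cases p) auto

context
  fixes p :: ereal assumes p: "1 \<le> p"
begin

lemma nnp_cases:
  obtains "nnp p = (\<lambda>a b. max a b)" | r where "r \<ge> 1" "nnp p = nnr r"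
proof (cases rule: ereal_ge1_cases[OF p])
  case 1 then show ?thesis using that(1) by (simp add: nnp_def[abs_def])
next
  case (2 r) then show ?thesis using that(2)[of r] by (simp add: nnp_def[abs_def])
qed

lemma nnp_lower: assumes "0 \<le> a" "0 \<le> b" shows "max a b \<le> nnp p a b"
proof (cases rule: nnp_cases)
  case 1 then show ?thesis by simp
next
  case (2 r) then show ?thesis using nnr_lower[OF 2(1) assms] by simp
qed

lemma nnp_upper: assumes "0 \<le> a" "0 \<le> b" shows "nnp p a b \<le> a + b"
proof (cases rule: nnp_cases)
  case 1 then show ?thesis using assms by (simp add: max_def)
next
  case (2 r) then show ?thesis using nnr_upper[OF 2(1) assms] by simp
qed

lemma nnp_mono: assumes "0 \<le> a" "0 \<le> b" "a \<le> a'" "b \<le> b'" shows "nnp p a b \<le> nnp p a' b'"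
proof (cases rule: nnp_cases)
  case 1 then show ?thesis using assms by (simp add: max_def)
next
  case (2 r) then show ?thesis using nnr_mono[OF 2(1) assms] by simp
qed

lemma nnp_scale: assumes "0 \<le> c" "0 \<le> a" "0 \<le> b" shows "nnp p (c * a) (c * b) = c * nnp p a b"
proof (cases rule: nnp_cases)
  case 1 then show ?thesis using assms by (simp add: max_mult_distrib_left)
next
  case (2 r) then show ?thesis using nnr_scale[OF 2(1) assms] by simp
qed

lemma nnp_triangle:
  assumes "0 \<le> a1" "0 \<le> b1" "0 \<le> a2" "0 \<le> b2"
  shows "nnp p (a1 + a2) (b1 + b2) \<le> nnp p a1 b1 + nnp p a2 b2"
proof (cases rule: nnp_cases)
  case 1 then show ?thesis using assms by (simp add: max_def)
next
  case (2 r) then show ?thesis using nnr_triangle[OF 2(1) assms] by simp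
qed

lemma nnp_nonneg: "0 \<le> a \<Longrightarrow> 0 \<le> b \<Longrightarrow> 0 \<le> nnp p a b"
  using nnp_lower[of a b] by linarith

lemma nnp_zero_iff: "0 \<le> a \<Longrightarrow> 0 \<le> b \<Longrightarrow> nnp p a b = 0 \<longleftrightarrow> a = 0 \<and> b = 0"
  using nnp_lower[of a b] nnp_upper[of a b] by auto

end


lemma Mset_sum_dirac:
  fixes K :: nat and a :: "nat \<Rightarrow> real" and x :: "nat \<Rightarrow> 'd::finite \<Rightarrow> real"
  shows "(\<lambda>k. \<Sum>i<K. of_real (a i) * dirac_shift (x i) k) \<in> (Mset :: 'd::finite fseq set)"
proof (induction K)
  case 0 then show ?case using Mset_zero(1) by simp
next
  case (Suc K)
  have "(\<lambda>k. (\<Sum>i<K. of_real (a i) * dirac_shift (x i) k) + of_real (a K) * dirac_shift (x K) k) \<in> (Mset :: 'd fseq set)"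
    by (rule Mset_add(1)[OF Suc Mset_scale[OF dirac_Mset(1)]])
  then show ?case by simp
qed

context
  fixes L :: "'d::finite fseq"
  assumes adm: "spline_admissible L"
begin

lemma L_LSI: "L \<in> LSI" using adm unfolding spline_admissible_def by blast
lemma L_SG: "slowly_growing L" using L_LSI unfolding LSI_def by blast
lemma L_herm: "hermitian L" using L_LSI unfolding LSI_def by blast
lemma Z_fin: "finite {k. L k = 0}" using adm unfolding spline_admissible_def by blast

lemma pinv_LSI: "pinv L \<in> LSI"
proof -
  obtain M where M: "is_pseudoinverse L M" using adm unfolding spline_admissible_def by blast
  have "M = pinv L"
  proof
    fix k
    have e1: "L k * (M k * L k) = L k"
      using M unfolding is_pseudoinverse_def comp_op_def by (metis (no_types, lifting))
    have e2: "M k * (L k * M k) = M k"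
      using M unfolding is_pseudoinverse_def comp_op_def by (metis (no_types, lifting))
    show "M k = pinv L k"
    proof (cases "L k = 0")
      case True then show ?thesis using e2 by (simp add: pinv_def)
    next
      case False
      then have "M k * L k = 1" using e1 by (metis mult_cancel_left1)
      then show ?thesis using False by (simp add: pinv_def field_simps)
    qed
  qed
  then show ?thesis using M unfolding is_pseudoinverse_def by blast
qed

lemma pinv_SG: "slowly_growing (pinv L)" using pinv_LSI unfolding LSI_def by blast

lemma l2_proj: "l2norm (proj_null L f) = L2_set (\<lambda>k. cmod (f k)) {k. L k = 0}"
proof -
  have "infsum (\<lambda>k. (cmod (proj_null L f k))\<^sup>2) UNIV = infsum (\<lambda>k. (cmod (f k))\<^sup>2) {k. L k = 0}"
    by (rule infsum_cong_neutral) (auto simp: proj_null_def)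
  also have "\<dots> = (\<Sum>k\<in>{k. L k = 0}. (cmod (f k))\<^sup>2)" using Z_fin by simp
  finally show ?thesis unfolding l2norm_def L2_set_def by simp
qed

lemma l2_nonneg: "0 \<le> l2norm (proj_null L f)"
  unfolding l2_proj by simp

lemma l2_coeff: "L k = 0 \<Longrightarrow> cmod (f k) \<le> l2norm (proj_null L f)"
  unfolding l2_proj by (rule member_le_L2_set[OF Z_fin]) simp

lemma l2_add: "l2norm (proj_null L (\<lambda>k. f k + g k)) \<le> l2norm (proj_null L f) + l2norm (proj_null L g)"
proof -
  have "L2_set (\<lambda>k. cmod (f k + g k)) {k. L k = 0} \<le> L2_set (\<lambda>k. cmod (f k) + cmod (g k)) {k. L k = 0}"
    by (rule L2_set_mono) (auto intro: norm_triangle_ineq)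
  also have "\<dots> \<le> L2_set (\<lambda>k. cmod (f k)) {k. L k = 0} + L2_set (\<lambda>k. cmod (g k)) {k. L k = 0}"
    by (rule L2_set_triangle_ineq)
  finally show ?thesis unfolding l2_proj .
qed

lemma l2_scale: "l2norm (proj_null L (\<lambda>k. of_real c * f k)) = \<bar>c\<bar> * l2norm (proj_null L f)"
  unfolding l2_proj by (simp add: norm_mult L2_set_right_distrib)

lemma l2_zero_iff: "l2norm (proj_null L f) = 0 \<longleftrightarrow> (\<forall>k. L k = 0 \<longrightarrow> f k = 0)"
  unfolding l2_proj using Z_fin by (simp add: L2_set_eq_0_iff)

lemma apply_add: "apply_op L (\<lambda>k. f k + g k) = (\<lambda>k. apply_op L f k + apply_op L g k)"
  unfolding apply_op_def by (simp add: distrib_left)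
lemma apply_diff: "apply_op L (\<lambda>k. f k - g k) = (\<lambda>k. apply_op L f k - apply_op L g k)"
  unfolding apply_op_def by (simp add: right_diff_distrib)
lemma apply_scale: "apply_op L (\<lambda>k. of_real c * f k) = (\<lambda>k. of_real c * apply_op L f k)"
  unfolding apply_op_def by (simp add: mult.left_commute)
lemma apply_zero: "apply_op L (\<lambda>k. 0) = (\<lambda>k. 0)"
  unfolding apply_op_def by simp

lemma ns_Sdual: "f \<in> native_space L \<Longrightarrow> f \<in> Sdual" unfolding native_space_def by blast
lemma ns_Mset: "f \<in> native_space L \<Longrightarrow> apply_op L f \<in> Mset" unfolding native_space_def by blast
lemma ns_SG: "f \<in> native_space L \<Longrightarrow> slowly_growing f" using ns_Sdual unfolding Sdual_def by blast

lemma ns_add: "f \<in> native_space L \<Longrightarrow> g \<in> native_space L \<Longrightarrow> (\<lambda>k. f k + g k) \<in> native_space L"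
  unfolding native_space_def by (auto simp: apply_add intro: Sdual_add Mset_add)
lemma ns_scale: "f \<in> native_space L \<Longrightarrow> (\<lambda>k. of_real c * f k) \<in> native_space L"
  unfolding native_space_def by (auto simp: apply_scale intro: Sdual_rscale Mset_scale)
lemma ns_diff: "f \<in> native_space L \<Longrightarrow> g \<in> native_space L \<Longrightarrow> (\<lambda>k. f k - g k) \<in> native_space L"
  unfolding native_space_def by (auto simp: apply_diff intro: Sdual_diff Mset_diff)
lemma ns_zero: "(\<lambda>k. 0) \<in> native_space L"
  unfolding native_space_def by (auto simp: apply_zero intro: Sdual_zero Mset_zero)

lemma Sspace_ns: "Sspace \<subseteq> native_space L"
proof
  fix \<phi> :: "'d fseq" assume \<phi>: "\<phi> \<in> Sspace"
  have "apply_op L \<phi> \<in> Sspace" unfolding apply_op_def by (rule Sspace_mult[OF L_LSI \<phi>])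
  then show "\<phi> \<in> native_space L" unfolding native_space_def
    using \<phi> Sspace_sub_Sdual Sspace_Mset(1) by blast
qed

lemma spline_ns: "is_periodic_spline L f \<Longrightarrow> f \<in> native_space L"
  unfolding is_periodic_spline_def native_space_def using Mset_sum_dirac by auto

lemma proj_Sspace: "hermitian f \<Longrightarrow> proj_null L f \<in> Sspace"
  unfolding Sspace_def
proof (intro CollectI conjI)
  show "rapidly_decaying (proj_null L f)" by (rule RD_finite_support[OF Z_fin]) (simp add: proj_null_def)
  assume "hermitian f"
  then show "hermitian (proj_null L f)" by (rule herm_proj[OF L_herm])
qed

lemma decomposition:
  "native_space L =
     {(\<lambda>k. apply_op (pinv L) w k + n k) |w n. w \<in> Mset \<and> n \<in> null_space L}"
proof (intro equalityI subsetI)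
  fix f assume f: "f \<in> native_space L"
  define w where "w = apply_op L f"
  define n where "n = proj_null L f"
  have w: "w \<in> Mset" unfolding w_def by (rule ns_Mset[OF f])
  have fh: "hermitian f" using ns_Sdual[OF f] unfolding Sdual_def by blast
  have n: "n \<in> null_space L"
    unfolding null_space_def n_def
    using proj_Sspace[OF fh] Sspace_sub_Sdual by (auto simp: apply_op_def proj_null_def)
  have "f = (\<lambda>k. apply_op (pinv L) w k + n k)"
    unfolding w_def n_def by (auto simp: apply_op_def proj_null_def pinv_def)
  then show "f \<in> {(\<lambda>k. apply_op (pinv L) w k + n k) |w n. w \<in> Mset \<and> n \<in> null_space L}"
    using w n by blast
next
  fix g assume "g \<in> {(\<lambda>k. apply_op (pinv L) w k + n k) |w n. w \<in> Mset \<and> n \<in> null_space L}"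
  then obtain w n where g: "g = (\<lambda>k. apply_op (pinv L) w k + n k)" and w: "w \<in> Mset" and n: "n \<in> null_space L"
    by blast
  have nS: "n \<in> Sdual" and nz: "\<And>k. L k * n k = 0"
    using n unfolding null_space_def apply_op_def by (auto simp: fun_eq_iff)
  have "apply_op (pinv L) w \<in> Sdual"
    unfolding apply_op_def by (rule Sdual_mult[OF pinv_LSI Mset_Sdual[OF w]])
  then have gS: "g \<in> Sdual" unfolding g by (rule Sdual_add[OF _ nS])
  have wh: "hermitian w" using Mset_Sdual[OF w] unfolding Sdual_def by blast
  have "apply_op L g = (\<lambda>k. w k - proj_null L w k)"
    unfolding g apply_op_def proj_null_def pinv_def using nz
    by (auto simp: fun_eq_iff distrib_left)
  moreover have "(\<lambda>k. w k - proj_null L w k) \<in> Mset"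
    by (rule Mset_diff[OF w Sspace_Mset(1)[OF proj_Sspace[OF wh]]])
  ultimately show "g \<in> native_space L" unfolding native_space_def using gS by simp
qed

lemma direct:
  "{apply_op (pinv L) w |w. w \<in> Mset} \<inter> null_space L = {(\<lambda>k. 0)}"
proof (intro equalityI subsetI)
  fix g assume "g \<in> {apply_op (pinv L) w |w. w \<in> Mset} \<inter> null_space L"
  then obtain w where g: "g = apply_op (pinv L) w" and n: "g \<in> null_space L" by blast
  have "\<And>k. L k * g k = 0" using n unfolding null_space_def apply_op_def by (auto simp: fun_eq_iff)
  then have "g k = 0" for k
  proof (cases "L k = 0")
    case True then show ?thesis unfolding g apply_op_def pinv_def by simp
  next
    case False then show ?thesis using \<open>\<And>k. L k * g k = 0\<close>[of k] by simp
  qed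
  then show "g \<in> {(\<lambda>k. 0)}" by auto
next
  fix g :: "'d fseq" assume "g \<in> {(\<lambda>k. 0 :: complex)}"
  then have g: "g = (\<lambda>k. 0)" by simp
  have "g = apply_op (pinv L) (\<lambda>k. 0)" unfolding g apply_op_def by simp
  moreover have "g \<in> null_space L" unfolding g null_space_def apply_op_def using Sdual_zero by simp
  ultimately show "g \<in> {apply_op (pinv L) w |w. w \<in> Mset} \<inter> null_space L"
    using Mset_zero(1) by blast
qed

end


lemma infsum_dct:
  fixes h :: "nat \<Rightarrow> 'a \<Rightarrow> complex" and G :: "'a \<Rightarrow> real"
  assumes G: "G summable_on UNIV"
    and bound: "\<And>m k. m \<ge> M \<Longrightarrow> cmod (h m k) \<le> G k"
    and lim: "\<And>k. (\<lambda>m. h m k) \<longlonglongrightarrow> 0"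
  shows "(\<lambda>m. infsum (h m) UNIV) \<longlonglongrightarrow> 0"
proof (rule LIMSEQ_I)
  fix r :: real assume r: "0 < r"
  have G0: "0 \<le> G k" for k using bound[of M k] norm_ge_zero[of "h M k"] by linarith
  obtain F where F: "finite F" "dist (sum G F) (infsum G UNIV) \<le> r / 4"
    using infsum_finite_approximation[OF G, of "r/4"] r by auto
  have GF: "infsum G (UNIV - F) \<le> r / 4"
  proof -
    have "infsum G (UNIV - F) = infsum G UNIV - infsum G F"
      by (rule infsum_Diff[OF G]) (use F in auto)
    moreover have "\<bar>sum G F - infsum G UNIV\<bar> \<le> r / 4" using F(2) by (simp add: dist_real_def)
    moreover have "infsum G F = sum G F" using F(1) by simp
    ultimately show ?thesis using abs_le_D2[of "sum G F - infsum G UNIV" "r/4"] by linarith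
  qed
  have "(\<lambda>m. \<Sum>k\<in>F. cmod (h m k)) \<longlonglongrightarrow> (\<Sum>k\<in>F. 0)"
    by (intro tendsto_sum tendsto_norm_zero lim)
  then obtain no where no: "\<And>m. m \<ge> no \<Longrightarrow> norm ((\<Sum>k\<in>F. cmod (h m k)) - 0) < r / 2"
    using LIMSEQ_D[of _ 0 "r/2"] r by force
  show "\<exists>no. \<forall>m\<ge>no. norm (infsum (h m) UNIV - 0) < r"
  proof (intro exI allI impI)
    fix m assume m: "m \<ge> max no M"
    have nsum: "(\<lambda>k. cmod (h m k)) summable_on UNIV"
      by (rule summable_on_comparison_test[OF G]) (use bound m in auto)
    have sA: "(\<lambda>k. cmod (h m k)) summable_on A" and sA': "h m summable_on A" for A
      using norm_summable_subset[OF nsum] by auto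
    have "infsum (h m) (UNIV - F) = infsum (h m) UNIV - infsum (h m) F"
      by (rule infsum_Diff) (auto intro: sA')
    then have "infsum (h m) UNIV = infsum (h m) F + infsum (h m) (UNIV - F)" by simp
    then have "cmod (infsum (h m) UNIV) \<le> cmod (infsum (h m) F) + cmod (infsum (h m) (UNIV - F))"
      by (simp add: norm_triangle_ineq)
    also have "cmod (infsum (h m) F) \<le> (\<Sum>k\<in>F. cmod (h m k))"
      using F(1) by (simp add: norm_sum)
    also have "cmod (infsum (h m) (UNIV - F)) \<le> infsum (\<lambda>k. cmod (h m k)) (UNIV - F)"
      by (rule norm_infsum_bound[OF sA])
    also have "\<dots> \<le> infsum G (UNIV - F)"
      by (rule infsum_mono[OF sA]) (use bound m summable_on_subset_banach[OF G] in auto)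
    finally have "cmod (infsum (h m) UNIV) \<le> (\<Sum>k\<in>F. cmod (h m k)) + r / 4"
      using GF by linarith
    moreover have "(\<Sum>k\<in>F. cmod (h m k)) < r / 2" using no[of m] m by simp
    ultimately show "norm (infsum (h m) UNIV - 0) < r" using r by simp
  qed
qed

lemma pairing_dct:
  fixes h :: "nat \<Rightarrow> 'd::finite fseq"
  assumes \<phi>: "rapidly_decaying \<phi>" and H: "slowly_growing H"
    and bound: "\<And>m k. m \<ge> M \<Longrightarrow> cmod (h m k) \<le> cmod (H k)"
    and lim: "\<And>k. (\<lambda>m. h m k) \<longlonglongrightarrow> 0"
  shows "(\<lambda>m. pairing (h m) \<phi>) \<longlonglongrightarrow> 0"
proof -
  have "(\<lambda>m. infsum (\<lambda>k. h m k * \<phi> (kneg k)) UNIV) \<longlonglongrightarrow> 0"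
  proof (rule infsum_dct[OF pair_norm_summable[OF H \<phi>]])
    fix m k assume "m \<ge> M"
    then show "cmod (h m k * \<phi> (kneg k)) \<le> cmod (H k * \<phi> (kneg k))"
      using bound by (simp add: norm_mult mult_right_mono)
  next
    fix k show "(\<lambda>m. h m k * \<phi> (kneg k)) \<longlonglongrightarrow> 0"
      using tendsto_mult_left_zero[OF lim[of k]] by simp
  qed
  then have "(\<lambda>m. Re (infsum (\<lambda>k. h m k * \<phi> (kneg k)) UNIV)) \<longlonglongrightarrow> Re 0"
    by (rule tendsto_Re)
  then show ?thesis unfolding pairing_def by simp
qed

lemma SG_dom: "slowly_growing g \<Longrightarrow> (\<And>k. cmod (f k) \<le> cmod (g k)) \<Longrightarrow> slowly_growing f"
  unfolding slowly_growing_def by (meson order_trans)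

lemma SG_norm: "slowly_growing a \<Longrightarrow> slowly_growing (\<lambda>k. of_real (cmod (a k)))"
  unfolding slowly_growing_def by simp


context
  fixes L :: "'d::finite fseq" and p :: ereal
  assumes adm: "spline_admissible L" and p1: "1 \<le> p"
begin

lemma A_nonneg: "f \<in> native_space L \<Longrightarrow> 0 \<le> Mnorm (apply_op L f)"
  by (rule Mnorm_nonneg[OF ns_Mset[OF adm]])

lemma A_le: "f \<in> native_space L \<Longrightarrow> Mnorm (apply_op L f) \<le> native_norm L p f"
  using nnp_lower[OF p1 A_nonneg l2_nonneg[OF adm], of f f] unfolding native_norm_nnp by simp

lemma B_le: "f \<in> native_space L \<Longrightarrow> l2norm (proj_null L f) \<le> native_norm L p f"
  using nnp_lower[OF p1 A_nonneg l2_nonneg[OF adm], of f f] unfolding native_norm_nnp by simp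

lemma nn_le_sum: "f \<in> native_space L \<Longrightarrow> native_norm L p f \<le> Mnorm (apply_op L f) + l2norm (proj_null L f)"
  using nnp_upper[OF p1 A_nonneg l2_nonneg[OF adm], of f f] unfolding native_norm_nnp by simp

lemma nn_nonneg: "f \<in> native_space L \<Longrightarrow> 0 \<le> native_norm L p f"
  using A_le A_nonneg by (meson order_trans)

lemma nn_zero_iff: "f \<in> native_space L \<Longrightarrow> native_norm L p f = 0 \<longleftrightarrow> f = (\<lambda>k. 0)"
proof
  assume f: "f \<in> native_space L" and z: "native_norm L p f = 0"
  have "Mnorm (apply_op L f) = 0" "l2norm (proj_null L f) = 0"
    using nnp_zero_iff[OF p1 A_nonneg[OF f] l2_nonneg[OF adm]] z unfolding native_norm_nnp by auto
  then have "apply_op L f = (\<lambda>k. 0)" "\<forall>k. L k = 0 \<longrightarrow> f k = 0"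
    using Mnorm_eq_0[OF ns_Mset[OF adm f]] l2_zero_iff[OF adm] by auto
  then show "f = (\<lambda>k. 0)" unfolding apply_op_def by (auto simp: fun_eq_iff)
next
  assume "f = (\<lambda>k. 0)"
  then have "Mnorm (apply_op L f) = 0" using Mset_zero(2)[where 'd='d] by (simp add: apply_zero[OF adm])
  moreover have "l2norm (proj_null L f) = 0" using l2_zero_iff[OF adm] \<open>f = (\<lambda>k. 0)\<close> by simp
  ultimately show "native_norm L p f = 0"
    unfolding native_norm_nnp using nnp_zero_iff[OF p1, of 0 0] by simp
qed

lemma nn_scale: "f \<in> native_space L \<Longrightarrow> native_norm L p (\<lambda>k. of_real c * f k) = \<bar>c\<bar> * native_norm L p f"
proof -
  assume f: "f \<in> native_space L"
  have "Mnorm (apply_op L (\<lambda>k. of_real c * f k)) = \<bar>c\<bar> * Mnorm (apply_op L f)"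
    unfolding apply_scale[OF adm] by (rule Mnorm_scale[OF ns_Mset[OF adm f]])
  moreover have "l2norm (proj_null L (\<lambda>k. of_real c * f k)) = \<bar>c\<bar> * l2norm (proj_null L f)"
    by (rule l2_scale[OF adm])
  ultimately show ?thesis unfolding native_norm_nnp
    using nnp_scale[OF p1 abs_ge_zero A_nonneg[OF f] l2_nonneg[OF adm]] by simp
qed

lemma nn_triangle:
  assumes f: "f \<in> native_space L" and g: "g \<in> native_space L"
  shows "native_norm L p (\<lambda>k. f k + g k) \<le> native_norm L p f + native_norm L p g"
proof -
  have a: "Mnorm (apply_op L (\<lambda>k. f k + g k)) \<le> Mnorm (apply_op L f) + Mnorm (apply_op L g)"
    unfolding apply_add[OF adm] by (rule Mset_add(2)[OF ns_Mset[OF adm f] ns_Mset[OF adm g]])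
  have b: "l2norm (proj_null L (\<lambda>k. f k + g k)) \<le> l2norm (proj_null L f) + l2norm (proj_null L g)"
    by (rule l2_add[OF adm])
  have "native_norm L p (\<lambda>k. f k + g k)
      \<le> nnp p (Mnorm (apply_op L f) + Mnorm (apply_op L g)) (l2norm (proj_null L f) + l2norm (proj_null L g))"
    unfolding native_norm_nnp
    by (rule nnp_mono[OF p1 A_nonneg[OF ns_add[OF adm f g]] l2_nonneg[OF adm] a b])
  also have "\<dots> \<le> native_norm L p f + native_norm L p g"
    unfolding native_norm_nnp
    by (rule nnp_triangle[OF p1 A_nonneg[OF f] l2_nonneg[OF adm] A_nonneg[OF g] l2_nonneg[OF adm]])
  finally show ?thesis .
qed

lemma nn_equiv:
  assumes q1: "1 \<le> q"
  shows "\<exists>C1>0. \<exists>C2>0. \<forall>f\<in>native_space L.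
              C1 * native_norm L p f \<le> native_norm L q f \<and> native_norm L q f \<le> C2 * native_norm L p f"
proof -
  have "1/2 * native_norm L p f \<le> native_norm L q f \<and> native_norm L q f \<le> 2 * native_norm L p f"
    if f: "f \<in> native_space L" for f
  proof -
  let ?a = "Mnorm (apply_op L f)" and ?b = "l2norm (proj_null L f)"
  have a: "0 \<le> ?a" and b: "0 \<le> ?b" using A_nonneg[OF f] l2_nonneg[OF adm] by auto
  have pl: "max ?a ?b \<le> native_norm L p f" "native_norm L p f \<le> ?a + ?b"
    unfolding native_norm_nnp using nnp_lower[OF p1 a b] nnp_upper[OF p1 a b] by auto
  have ql: "max ?a ?b \<le> native_norm L q f" "native_norm L q f \<le> ?a + ?b"
    unfolding native_norm_nnp using nnp_lower[OF q1 a b] nnp_upper[OF q1 a b] by auto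
  show ?thesis using pl ql by (simp add: max_def split: if_splits)
  qed
  then have "\<forall>f\<in>native_space L. 1/2 * native_norm L p f \<le> native_norm L q f \<and> native_norm L q f \<le> 2 * native_norm L p f"
    by blast
  moreover have "(1/2::real) > 0" "(2::real) > 0" by simp_all
  ultimately show ?thesis by blast
qed

lemma Mnorm_cont: "\<exists>C. \<forall>f\<in>native_space L. Mnorm (apply_op L f) \<le> C * native_norm L p f"
  using A_le by (intro exI[of _ 1]) simp

end


context
  fixes L :: "'d::finite fseq" and p :: ereal
  assumes adm: "spline_admissible L" and p1: "1 \<le> p"
begin

lemma complete_ns:
  assumes s: "\<forall>n. s n \<in> native_space L"
    and C: "\<forall>e>0. \<exists>N. \<forall>m\<ge>N. \<forall>n\<ge>N. native_norm L p (\<lambda>k. s m k - s n k) < e"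
  shows "\<exists>f\<in>native_space L. (\<lambda>n. native_norm L p (\<lambda>k. s n k - f k)) \<longlonglongrightarrow> 0"
proof -
  define w where "w k = 1 + cmod (pinv L k)" for k
  have w1: "1 \<le> w k" for k unfolding w_def by simp
  have d: "(\<lambda>k. s m k - s n k) \<in> native_space L" for m n by (rule ns_diff[OF adm s[rule_format] s[rule_format]])
  have coef: "cmod (s m k - s n k) \<le> w k * native_norm L p (\<lambda>k. s m k - s n k)" for m n k
  proof -
    let ?d = "\<lambda>k. s m k - s n k"
    have nn0: "0 \<le> native_norm L p ?d" by (rule nn_nonneg[OF adm p1 d])
    have le_w: "x \<le> w k * x" if "0 \<le> x" for x using w1[of k] that by (simp add: mult_le_cancel_right1)
    show ?thesis
    proof (cases "L k = 0")
      case True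
      have "cmod (s m k - s n k) \<le> l2norm (proj_null L ?d)" by (rule l2_coeff[OF adm True])
      also have "\<dots> \<le> native_norm L p ?d" by (rule B_le[OF adm p1 d])
      finally show ?thesis using le_w[OF nn0] by linarith
    next
      case False
      have "cmod (apply_op L ?d k) \<le> Mnorm (apply_op L ?d)" by (rule coeff_le_Mnorm[OF ns_Mset[OF adm d]])
      also have "\<dots> \<le> native_norm L p ?d" by (rule A_le[OF adm p1 d])
      finally have h: "cmod (L k * (s m k - s n k)) \<le> native_norm L p ?d" unfolding apply_op_def .
      have e: "s m k - s n k = pinv L k * (L k * (s m k - s n k))" using False by (simp add: pinv_def)
      have "cmod (s m k - s n k) = cmod (pinv L k * (L k * (s m k - s n k)))" using e by (rule arg_cong)
      also have "\<dots> = cmod (pinv L k) * cmod (L k * (s m k - s n k))" by (rule norm_mult)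
      finally have "cmod (s m k - s n k) = cmod (pinv L k) * cmod (L k * (s m k - s n k))" .
      also have "\<dots> \<le> cmod (pinv L k) * native_norm L p ?d" by (intro mult_left_mono h) simp
      also have "\<dots> \<le> w k * native_norm L p ?d" unfolding w_def using nn0 by (intro mult_right_mono) auto
      finally show ?thesis .
    qed
  qed
  have cauchy: "Cauchy (\<lambda>n. s n k)" for k
  proof (rule CauchyI)
    fix e :: real assume e: "0 < e"
    have wk: "0 < w k" using w1[of k] by simp
    obtain N where N: "\<forall>m\<ge>N. \<forall>n\<ge>N. native_norm L p (\<lambda>k. s m k - s n k) < e / w k"
      using C[rule_format, OF divide_pos_pos[OF e wk]] by blast
    show "\<exists>M. \<forall>m\<ge>M. \<forall>n\<ge>M. norm (s m k - s n k) < e"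
    proof (intro exI allI impI)
      fix m n assume "m \<ge> N" "n \<ge> N"
      then have "native_norm L p (\<lambda>k. s m k - s n k) < e / w k" using N by blast
      then have "w k * native_norm L p (\<lambda>k. s m k - s n k) < e" using wk by (simp add: field_simps)
      then show "norm (s m k - s n k) < e" using coef[of m k n] by simp
    qed
  qed
  define f where "f k = lim (\<lambda>n. s n k)" for k
  have conv: "(\<lambda>n. s n k) \<longlonglongrightarrow> f k" for k
    unfolding f_def using cauchy[of k] by (simp add: Cauchy_convergent_iff convergent_LIMSEQ_iff)
  have tail: "cmod (s n k - f k) \<le> w k * e"
    if N: "\<forall>m\<ge>N. \<forall>n\<ge>N. native_norm L p (\<lambda>k. s m k - s n k) < e" and n: "n \<ge> N" for N n k e
  proof (rule LIMSEQ_le_const2)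
    show "(\<lambda>m. cmod (s n k - s m k)) \<longlonglongrightarrow> cmod (s n k - f k)"
      by (intro tendsto_norm tendsto_diff tendsto_const conv)
    show "\<exists>N'. \<forall>m\<ge>N'. cmod (s n k - s m k) \<le> w k * e"
    proof (intro exI allI impI)
      fix m assume "m \<ge> N"
      then have "native_norm L p (\<lambda>k. s n k - s m k) < e" using N n by blast
      then have "w k * native_norm L p (\<lambda>k. s n k - s m k) \<le> w k * e"
        using w1[of k] by (intro mult_left_mono) auto
      then show "cmod (s n k - s m k) \<le> w k * e" using coef[of n k m] by linarith
    qed
  qed
  obtain N1 where N1: "\<forall>m\<ge>N1. \<forall>n\<ge>N1. native_norm L p (\<lambda>k. s m k - s n k) < 1"
    using C[rule_format, OF zero_less_one] by blast
  have t1: "cmod (s n k - f k) \<le> w k" if "n \<ge> N1" for n k using tail[OF N1 that, of k] by simp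
  have fSG: "slowly_growing f"
  proof (rule SG_dom)
    define g where "g k = (of_real (cmod (s N1 k)) + (1 + of_real (cmod (pinv L k))) :: complex)" for k
    show "slowly_growing g" unfolding g_def
      by (intro SG_add SG_const SG_norm ns_SG[OF adm s[rule_format]] pinv_SG[OF adm])
    fix k
    have "cmod (g k) = cmod (s N1 k) + w k" unfolding g_def w_def
    proof -
      have "of_real (cmod (s N1 k)) + (1 + of_real (cmod (pinv L k))) = (of_real (cmod (s N1 k) + (1 + cmod (pinv L k))) :: complex)"
        by simp
      then show "cmod (of_real (cmod (s N1 k)) + (1 + of_real (cmod (pinv L k)))) = cmod (s N1 k) + (1 + cmod (pinv L k))"
        by (simp only: norm_of_real) simp
    qed
    moreover have "cmod (f k) \<le> cmod (s N1 k) + cmod (s N1 k - f k)"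
      using norm_triangle_ineq4[of "s N1 k" "s N1 k - f k"] by simp
    ultimately show "cmod (f k) \<le> cmod (g k)" using t1[of N1 k] by simp
  qed
  have fherm: "hermitian f" unfolding hermitian_def
  proof
    fix k
    have "(\<lambda>n. s n (kneg k)) = (\<lambda>n. cnj (s n k))"
      using s unfolding native_space_def Sdual_def hermitian_def by auto
    then have l1: "(\<lambda>n. cnj (s n k)) \<longlonglongrightarrow> f (kneg k)" using conv[of "kneg k"] by simp
    have l2: "(\<lambda>n. cnj (s n k)) \<longlonglongrightarrow> cnj (f k)" by (intro tendsto_cnj conv)
    show "f (kneg k) = cnj (f k)" by (rule LIMSEQ_unique[OF l1 l2])
  qed
  have fS: "f \<in> Sdual" unfolding Sdual_def using fSG fherm by blast
  define G where "G n = apply_op L (\<lambda>k. s n k - f k)" for n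
  have GS: "G n \<in> Sdual" for n
    unfolding G_def apply_op_def by (intro Sdual_mult[OF L_LSI[OF adm]] Sdual_diff fS ns_Sdual[OF adm s[rule_format]])
  define H where "H k = L k * (1 + of_real (cmod (pinv L k)))" for k
  have HSG: "slowly_growing H" unfolding H_def
    by (intro SG_mult L_SG[OF adm] SG_add SG_const SG_norm pinv_SG[OF adm])
  have Gbound: "G n \<in> Mset \<and> Mnorm (G n) \<le> e"
    if N: "\<forall>m\<ge>N. \<forall>n\<ge>N. native_norm L p (\<lambda>k. s m k - s n k) < e" and n: "n \<ge> N" for N n e
  proof -
    have "pairing (G n) \<phi> \<le> e * sup_norm \<phi>" if \<phi>: "\<phi> \<in> Sspace" for \<phi>
    proof -
      have RD\<phi>: "rapidly_decaying \<phi>" using \<phi> by (rule Sspace_RD)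
      define h where "h m k = L k * (f k - s m k)" for m k
      have hS: "h m \<in> Sdual" for m
        unfolding h_def by (intro Sdual_mult[OF L_LSI[OF adm]] Sdual_diff fS ns_Sdual[OF adm s[rule_format]])
      have lim1: "(\<lambda>m. pairing (h m) \<phi>) \<longlonglongrightarrow> 0"
      proof (rule pairing_dct[OF RD\<phi> HSG])
        fix m k assume m: "m \<ge> N1"
        have "cmod (h m k) = cmod (L k) * cmod (s m k - f k)" unfolding h_def
          by (simp add: norm_mult norm_minus_commute)
        also have "\<dots> \<le> cmod (L k) * w k" by (intro mult_left_mono t1[OF m]) simp
        also have "\<dots> = cmod (H k)" unfolding H_def w_def norm_mult
        proof -
          have "(1 + of_real (cmod (pinv L k)) :: complex) = of_real (1 + cmod (pinv L k))" by simp
          then have "cmod (1 + of_real (cmod (pinv L k)) :: complex) = 1 + cmod (pinv L k)"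
            by (simp only: norm_of_real) simp
          then show "cmod (L k) * (1 + cmod (pinv L k)) = cmod (L k) * cmod (1 + complex_of_real (cmod (pinv L k)))"
            by simp
        qed
        finally show "cmod (h m k) \<le> cmod (H k)" .
      next
        fix k
        have "(\<lambda>m. f k - s m k) \<longlonglongrightarrow> f k - f k" by (intro tendsto_diff tendsto_const conv)
        then have "(\<lambda>m. f k - s m k) \<longlonglongrightarrow> 0" by simp
        then show "(\<lambda>m. h m k) \<longlonglongrightarrow> 0" unfolding h_def by (rule tendsto_mult_right_zero)
      qed
      have eq: "pairing (apply_op L (\<lambda>k. s n k - s m k)) \<phi> = pairing (G n) \<phi> + pairing (h m) \<phi>" for m
      proof -
        have "apply_op L (\<lambda>k. s n k - s m k) = (\<lambda>k. G n k + h m k)"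
          unfolding G_def h_def apply_op_def by (auto simp: algebra_simps)
        then show ?thesis
          using pairing_add1[of "G n" "h m" \<phi>] GS hS RD\<phi> unfolding Sdual_def by auto
      qed
      have lim2: "(\<lambda>m. pairing (apply_op L (\<lambda>k. s n k - s m k)) \<phi>) \<longlonglongrightarrow> pairing (G n) \<phi> + 0"
        unfolding eq by (intro tendsto_add tendsto_const lim1)
      show ?thesis
      proof (rule LIMSEQ_le_const2[OF lim2[simplified]])
        show "\<exists>N'. \<forall>m\<ge>N'. pairing (apply_op L (\<lambda>k. s n k - s m k)) \<phi> \<le> e * sup_norm \<phi>"
        proof (intro exI allI impI)
          fix m assume m: "m \<ge> N"
          have sn0: "0 \<le> sup_norm \<phi>" by (rule sup_norm_nonneg[OF RD\<phi>])
          have "pairing (apply_op L (\<lambda>k. s n k - s m k)) \<phi> \<le> Mnorm (apply_op L (\<lambda>k. s n k - s m k)) * sup_norm \<phi>"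
            by (rule pairing_le_Mnorm[OF ns_Mset[OF adm d] \<phi>])
          also have "\<dots> \<le> native_norm L p (\<lambda>k. s n k - s m k) * sup_norm \<phi>"
            by (intro mult_right_mono A_le[OF adm p1 d] sn0)
          also have "\<dots> \<le> e * sup_norm \<phi>"
            using N n m sn0 by (intro mult_right_mono) (auto simp: less_imp_le)
          finally show "pairing (apply_op L (\<lambda>k. s n k - s m k)) \<phi> \<le> e * sup_norm \<phi>" .
        qed
      qed
    qed
    then show ?thesis using Mset_intro[OF GS] by blast
  qed
  have LfM: "apply_op L f \<in> Mset"
  proof -
    have "G N1 \<in> Mset" using Gbound[OF N1 order_refl] by blast
    then have "(\<lambda>k. apply_op L (s N1) k - G N1 k) \<in> Mset"
      by (rule Mset_diff[OF ns_Mset[OF adm s[rule_format]]])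
    moreover have "(\<lambda>k. apply_op L (s N1) k - G N1 k) = apply_op L f"
      unfolding G_def apply_op_def by (auto simp: algebra_simps)
    ultimately show ?thesis by simp
  qed
  have fN: "f \<in> native_space L" unfolding native_space_def using fS LfM by blast
  show ?thesis
  proof (intro bexI[OF _ fN] LIMSEQ_I)
    fix r :: real assume r: "0 < r"
    define c where "c = real (card {k. L k = 0})"
    define e where "e = r / (2 * (1 + c))"
    have c0: "0 \<le> c" unfolding c_def by simp
    have e0: "0 < e" unfolding e_def using r c0 by simp
    obtain N where N: "\<forall>m\<ge>N. \<forall>n\<ge>N. native_norm L p (\<lambda>k. s m k - s n k) < e" using C e0 by blast
    show "\<exists>no. \<forall>n\<ge>no. norm (native_norm L p (\<lambda>k. s n k - f k) - 0) < r"
    proof (intro exI allI impI)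
      fix n assume n: "n \<ge> N"
      have dn: "(\<lambda>k. s n k - f k) \<in> native_space L" by (rule ns_diff[OF adm s[rule_format] fN])
      have a: "Mnorm (apply_op L (\<lambda>k. s n k - f k)) \<le> e"
        using Gbound[OF N n] unfolding G_def by blast
      have "l2norm (proj_null L (\<lambda>k. s n k - f k)) = L2_set (\<lambda>k. cmod (s n k - f k)) {k. L k = 0}"
        by (rule l2_proj[OF adm])
      also have "\<dots> \<le> (\<Sum>k\<in>{k. L k = 0}. cmod (s n k - f k))" by (rule L2_set_le_sum) simp
      also have "\<dots> \<le> (\<Sum>k\<in>{k. L k = 0}. e)"
      proof (rule sum_mono)
        fix k assume "k \<in> {k. L k = 0}"
        then have "w k = 1" unfolding w_def pinv_def by simp
        then show "cmod (s n k - f k) \<le> e" using tail[OF N n, of k] by simp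
      qed
      also have "\<dots> = c * e" unfolding c_def by simp
      finally have b: "l2norm (proj_null L (\<lambda>k. s n k - f k)) \<le> c * e" .
      have "native_norm L p (\<lambda>k. s n k - f k) \<le> e + c * e"
        using nn_le_sum[OF adm p1 dn] a b by linarith
      also have "\<dots> = r / 2"
      proof -
        have pos: "1 + c \<noteq> 0" using c0 by simp
        have "e + c * e = (r * (1 + c)) / (2 * (1 + c))" unfolding e_def by (simp add: algebra_simps add_divide_distrib)
        also have "\<dots> = r / 2" by (rule nonzero_mult_divide_mult_cancel_right[OF pos])
        finally show ?thesis .
      qed
      finally have "native_norm L p (\<lambda>k. s n k - f k) < r" using r by linarith
      moreover have "0 \<le> native_norm L p (\<lambda>k. s n k - f k)" by (rule nn_nonneg[OF adm p1 dn])
      ultimately show "norm (native_norm L p (\<lambda>k. s n k - f k) - 0) < r" by simp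
    qed
  qed
qed

lemma banach: "banach_on (native_space L) (native_norm L p)"
  unfolding banach_on_def
proof (intro conjI ballI allI impI)
  show "(\<lambda>k. 0) \<in> native_space L" by (rule ns_zero[OF adm])
  fix f assume f: "f \<in> native_space L"
  fix c :: real
  show "(\<lambda>k. of_real c * f k) \<in> native_space L" by (rule ns_scale[OF adm f])
  show "native_norm L p (\<lambda>k. of_real c * f k) = \<bar>c\<bar> * native_norm L p f" by (rule nn_scale[OF adm p1 f])
next
  fix f g assume f: "f \<in> native_space L" and g: "g \<in> native_space L"
  show "(\<lambda>k. f k + g k) \<in> native_space L" by (rule ns_add[OF adm f g])
  show "native_norm L p (\<lambda>k. f k + g k) \<le> native_norm L p f + native_norm L p g"
    by (rule nn_triangle[OF adm p1 f g])
next
  fix f assume f: "f \<in> native_space L"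
  show "0 \<le> native_norm L p f" by (rule nn_nonneg[OF adm p1 f])
  show "(native_norm L p f = 0) = (f = (\<lambda>k. 0))" by (rule nn_zero_iff[OF adm p1 f])
next
  fix s :: "nat \<Rightarrow> 'd fseq"
  assume "(\<forall>n. s n \<in> native_space L) \<and>
          (\<forall>e>0. \<exists>N. \<forall>m\<ge>N. \<forall>n\<ge>N. native_norm L p (\<lambda>k. s m k - s n k) < e)"
  then show "\<exists>f\<in>native_space L. (\<lambda>n. native_norm L p (\<lambda>k. s n k - f k)) \<longlonglongrightarrow> 0"
    using complete_ns by blast
qed

end


context
  fixes L :: "'d::finite fseq" and p :: ereal
  assumes adm: "spline_admissible L" and p1: "1 \<le> p"
begin

lemma seminorm_bound: "\<exists>C N. \<forall>\<phi>\<in>Sspace. native_norm L p \<phi> \<le> C * Sseminorm N \<phi>"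
proof -
  obtain CL NL where CL: "CL \<ge> 0" "\<And>k. cmod (L k) \<le> CL * (1 + kabs k) ^ NL"
    using SG_boundE[OF L_SG[OF adm]] by blast
  define N where "N = NL + 2 * CARD('d)"
  define S where "S = infsum wt (UNIV :: ('d \<Rightarrow> int) set)"
  define c where "c = real (card {k. L k = 0})"
  have S0: "0 \<le> S" unfolding S_def by (rule infsum_nonneg) (use wt_pos less_imp_le in blast)
  have c0: "0 \<le> c" unfolding c_def by simp
  have "native_norm L p \<phi> \<le> (CL * S + c) * Sseminorm N \<phi>" if \<phi>: "\<phi> \<in> Sspace" for \<phi>
  proof -
    have RD\<phi>: "rapidly_decaying \<phi>" by (rule Sspace_RD[OF \<phi>])
    have \<phi>N: "\<phi> \<in> native_space L" using Sspace_ns[OF adm] \<phi> by blast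
    obtain Cb where Cb: "\<And>k. cmod (\<phi> k) * (1 + kabs k) ^ N \<le> Cb" using RD_boundE[OF RD\<phi>] by blast
    define \<sigma> where "\<sigma> = Sseminorm N \<phi>"
    have bdd: "bdd_above (range (\<lambda>k. cmod (\<phi> k) * (1 + kabs k) ^ N))"
      by (rule bdd_aboveI2) (rule Cb)
    have \<sigma>: "cmod (\<phi> k) * (1 + kabs k) ^ N \<le> \<sigma>" for k
      unfolding \<sigma>_def Sseminorm_def by (rule cSUP_upper[OF _ bdd]) simp
    have c\<phi>: "cmod (\<phi> k) \<le> \<sigma>" for k
    proof -
      have "cmod (\<phi> k) * 1 \<le> cmod (\<phi> k) * (1 + kabs k) ^ N"
        by (intro mult_left_mono one_kabs_pow_ge1) simp
      then show ?thesis using \<sigma>[of k] by simp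
    qed
    have \<sigma>0: "0 \<le> \<sigma>" using c\<phi>[of undefined] norm_ge_zero[of "\<phi> undefined"] by linarith
    have L\<phi>S: "apply_op L \<phi> \<in> Sspace" unfolding apply_op_def by (rule Sspace_mult[OF L_LSI[OF adm] \<phi>])
    have "Mnorm (apply_op L \<phi>) \<le> infsum (\<lambda>k. cmod (apply_op L \<phi> k)) UNIV"
      by (rule Sspace_Mset(2)[OF L\<phi>S])
    also have "\<dots> \<le> infsum (\<lambda>k::'d\<Rightarrow>int. (CL * \<sigma>) * wt k) UNIV"
    proof (rule infsum_mono)
      show "(\<lambda>k. cmod (apply_op L \<phi> k)) summable_on UNIV"
        by (rule RD_norm_summable) (use L\<phi>S Sspace_RD in blast)
      show "(\<lambda>k::'d\<Rightarrow>int. CL * \<sigma> * wt k) summable_on UNIV" by (intro summable_on_cmult_right wt_summable)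
      fix k :: "'d \<Rightarrow> int"
      have pos: "0 < (1 + kabs k) ^ (2 * CARD('d))" using one_kabs_pos[of k] by simp
      have "cmod (apply_op L \<phi> k) \<le> CL * (1 + kabs k) ^ NL * cmod (\<phi> k)"
        unfolding apply_op_def norm_mult by (intro mult_right_mono CL(2)) simp
      also have "\<dots> = CL * (cmod (\<phi> k) * (1 + kabs k) ^ N) / (1 + kabs k) ^ (2 * CARD('d))"
        using pos one_kabs_pos[of k] unfolding N_def by (simp add: power_add field_simps)
      also have "\<dots> \<le> CL * \<sigma> / (1 + kabs k) ^ (2 * CARD('d))"
        using pos CL(1) \<sigma>[of k] by (intro divide_right_mono mult_left_mono) auto
      also have "\<dots> = (CL * \<sigma>) * (1 / (1 + kabs k) ^ (2 * CARD('d)))" by simp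
      also have "\<dots> \<le> (CL * \<sigma>) * wt k"
        using CL(1) \<sigma>0 wt_ge[of k] by (intro mult_left_mono) auto
      finally show "cmod (apply_op L \<phi> k) \<le> CL * \<sigma> * wt k" .
    qed
    also have "\<dots> = CL * \<sigma> * S" unfolding S_def by (rule infsum_cmult_right')
    finally have a: "Mnorm (apply_op L \<phi>) \<le> CL * S * \<sigma>" by (simp add: algebra_simps)
    have "l2norm (proj_null L \<phi>) = L2_set (\<lambda>k. cmod (\<phi> k)) {k. L k = 0}" by (rule l2_proj[OF adm])
    also have "\<dots> \<le> (\<Sum>k\<in>{k. L k = 0}. cmod (\<phi> k))" by (rule L2_set_le_sum) simp
    also have "\<dots> \<le> (\<Sum>k\<in>{k. L k = 0}. \<sigma>)" by (rule sum_mono) (rule c\<phi>)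
    also have "\<dots> = c * \<sigma>" unfolding c_def by simp
    finally have b: "l2norm (proj_null L \<phi>) \<le> c * \<sigma>" .
    have "native_norm L p \<phi> \<le> Mnorm (apply_op L \<phi>) + l2norm (proj_null L \<phi>)"
      by (rule nn_le_sum[OF adm p1 \<phi>N])
    also have "\<dots> \<le> (CL * S + c) * \<sigma>" using a b by (simp add: algebra_simps)
    finally show ?thesis unfolding \<sigma>_def .
  qed
  then show ?thesis by blast
qed

lemma pairing_cont: "\<forall>\<phi>\<in>Sspace. \<exists>C. \<forall>f\<in>native_space L. \<bar>pairing f \<phi>\<bar> \<le> C * native_norm L p f"
proof
  fix \<phi> :: "'d fseq" assume \<phi>: "\<phi> \<in> Sspace"
  have RD\<phi>: "rapidly_decaying \<phi>" by (rule Sspace_RD[OF \<phi>])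
  define \<psi> where "\<psi> = (\<lambda>j. pinv L (kneg j) * \<phi> j)"
  have kp: "(\<lambda>j. pinv L (kneg j)) \<in> LSI"
    using pinv_LSI[OF adm] unfolding LSI_def by (auto intro: SG_kneg herm_kneg)
  have \<psi>S: "\<psi> \<in> Sspace" unfolding \<psi>_def by (rule Sspace_mult[OF kp \<phi>])
  define D where "D = (\<Sum>k\<in>{k. L k = 0}. cmod (\<phi> (kneg k)))"
  have D0: "0 \<le> D" unfolding D_def by (simp add: sum_nonneg)
  have sn0: "0 \<le> sup_norm \<psi>" by (rule sup_norm_nonneg[OF Sspace_RD[OF \<psi>S]])
  have "\<bar>pairing f \<phi>\<bar> \<le> (sup_norm \<psi> + D) * native_norm L p f" if f: "f \<in> native_space L" for f
  proof -
    have fSG: "slowly_growing f" by (rule ns_SG[OF adm f])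
    have LfM: "apply_op L f \<in> Mset" by (rule ns_Mset[OF adm f])
    define u where "u = (\<lambda>k. pinv L k * apply_op L f k)"
    define v where "v = proj_null L f"
    have uSG: "slowly_growing u" unfolding u_def
      by (intro SG_mult pinv_SG[OF adm] Mset_SG[OF LfM])
    have vSG: "slowly_growing v" unfolding v_def
      by (rule RD_imp_SG, rule RD_finite_support[OF Z_fin[OF adm]]) (simp add: proj_null_def)
    have fuv: "f = (\<lambda>k. u k + v k)"
      unfolding u_def v_def by (auto simp: apply_op_def proj_null_def pinv_def)
    have split: "pairing f \<phi> = pairing u \<phi> + pairing v \<phi>"
      by (subst fuv, rule pairing_add1[OF uSG vSG RD\<phi>])
    have "pairing u \<phi> = pairing (apply_op L f) \<psi>"
      unfolding pairing_def u_def \<psi>_def by (simp add: mult_ac)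
    then have pu: "\<bar>pairing u \<phi>\<bar> \<le> Mnorm (apply_op L f) * sup_norm \<psi>"
      using abs_pairing_le_Mnorm[OF LfM \<psi>S] by simp
    also have "\<dots> \<le> native_norm L p f * sup_norm \<psi>"
      by (intro mult_right_mono A_le[OF adm p1 f] sn0)
    finally have pu': "\<bar>pairing u \<phi>\<bar> \<le> native_norm L p f * sup_norm \<psi>" .
    have "\<bar>pairing v \<phi>\<bar> \<le> infsum (\<lambda>k. cmod (v k * \<phi> (kneg k))) UNIV"
      by (rule pairing_abs_bound[OF vSG RD\<phi>])
    also have "\<dots> = (\<Sum>k\<in>{k. L k = 0}. cmod (f k * \<phi> (kneg k)))"
    proof -
      have "infsum (\<lambda>k. cmod (v k * \<phi> (kneg k))) UNIV = infsum (\<lambda>k. cmod (f k * \<phi> (kneg k))) {k. L k = 0}"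
        by (rule infsum_cong_neutral) (auto simp: v_def proj_null_def)
      then show ?thesis using Z_fin[OF adm] by simp
    qed
    also have "\<dots> \<le> (\<Sum>k\<in>{k. L k = 0}. native_norm L p f * cmod (\<phi> (kneg k)))"
    proof (rule sum_mono)
      fix k assume "k \<in> {k. L k = 0}"
      then have "cmod (f k) \<le> native_norm L p f"
        using l2_coeff[OF adm, of k f] B_le[OF adm p1 f] by simp
      then show "cmod (f k * \<phi> (kneg k)) \<le> native_norm L p f * cmod (\<phi> (kneg k))"
        unfolding norm_mult by (intro mult_right_mono) auto
    qed
    also have "\<dots> = native_norm L p f * D" unfolding D_def by (simp add: sum_distrib_left)
    finally have pv: "\<bar>pairing v \<phi>\<bar> \<le> native_norm L p f * D" .
    have "\<bar>pairing f \<phi>\<bar> \<le> \<bar>pairing u \<phi>\<bar> + \<bar>pairing v \<phi>\<bar>" unfolding split by (rule abs_triangle_ineq)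
    also have "\<dots> \<le> native_norm L p f * sup_norm \<psi> + native_norm L p f * D" using pu' pv by linarith
    finally show ?thesis by (simp add: algebra_simps)
  qed
  then show "\<exists>C. \<forall>f\<in>native_space L. \<bar>pairing f \<phi>\<bar> \<le> C * native_norm L p f" by blast
qed

end

theorem mainTheorem3:
  fixes L :: "'d::finite fseq" and p :: ereal
  assumes "spline_admissible L" and "1 \<le> p"
  shows "native_space L =
           {(\<lambda>k. apply_op (pinv L) w k + n k) |w n. w \<in> Mset \<and> n \<in> null_space L}
       \<and> {apply_op (pinv L) w |w. w \<in> Mset} \<inter> null_space L = {(\<lambda>k. 0)}
       \<and> banach_on (native_space L) (native_norm L p)
       \<and> (\<forall>q. 1 \<le> q \<longrightarrow> (\<exists>C1>0. \<exists>C2>0. \<forall>f\<in>native_space L.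
              C1 * native_norm L p f \<le> native_norm L q f \<and>
              native_norm L q f \<le> C2 * native_norm L p f))
       \<and> Sspace \<subseteq> native_space L \<and> native_space L \<subseteq> Sdual
       \<and> (\<exists>C N. \<forall>\<phi>\<in>Sspace. native_norm L p \<phi> \<le> C * Sseminorm N \<phi>)
       \<and> (\<forall>\<phi>\<in>Sspace. \<exists>C. \<forall>f\<in>native_space L. \<bar>pairing f \<phi>\<bar> \<le> C * native_norm L p f)
       \<and> (\<exists>C. \<forall>f\<in>native_space L. Mnorm (apply_op L f) \<le> C * native_norm L p f)
       \<and> (\<forall>f. is_periodic_spline L f \<longrightarrow> f \<in> native_space L)"
proof (intro conjI allI impI)
  show "native_space L = {(\<lambda>k. apply_op (pinv L) w k + n k) |w n. w \<in> Mset \<and> n \<in> null_space L}"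
    by (rule decomposition[OF assms(1)])
  show "{apply_op (pinv L) w |w. w \<in> Mset} \<inter> null_space L = {(\<lambda>k. 0)}"
    by (rule direct[OF assms(1)])
  show "banach_on (native_space L) (native_norm L p)" by (rule banach[OF assms])
  fix q :: ereal assume "1 \<le> q"
  then show "\<exists>C1>0. \<exists>C2>0. \<forall>f\<in>native_space L.
              C1 * native_norm L p f \<le> native_norm L q f \<and> native_norm L q f \<le> C2 * native_norm L p f"
    by (rule nn_equiv[OF assms])
next
  show "Sspace \<subseteq> native_space L" by (rule Sspace_ns[OF assms(1)])
  show "native_space L \<subseteq> Sdual" unfolding native_space_def by blast
  show "\<exists>C N. \<forall>\<phi>\<in>Sspace. native_norm L p \<phi> \<le> C * Sseminorm N \<phi>" by (rule seminorm_bound[OF assms])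
  show "\<forall>\<phi>\<in>Sspace. \<exists>C. \<forall>f\<in>native_space L. \<bar>pairing f \<phi>\<bar> \<le> C * native_norm L p f"
    by (rule pairing_cont[OF assms])
  show "\<exists>C. \<forall>f\<in>native_space L. Mnorm (apply_op L f) \<le> C * native_norm L p f"
    by (rule Mnorm_cont[OF assms])
next
  fix f assume "is_periodic_spline L f"
  then show "f \<in> native_space L" by (rule spline_ns[OF assms(1)])
qed


end
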